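(* Let $(X,Y)$ be a random pair and $(X_i,Y_i)$, $i=1,2,\dots$, independent copies of it. Assume that $\mathbf{E}[X]$, $\mathbf{E}[Y^2]$ and $\mathbf{E}[XY]$ are finite, and that the weight function $w:[0,1]\to\mathbb{R}$ is continuous on $[0,1]$. Then, as $n\to\infty$, $\widehat{\Delta}_n \to \Delta$ almost surely.
   Context: $F_Y$ denotes the cdf of $Y$. The weight function $w:[0,1]\to[-\infty,\infty]$ is finite on $(0,1)$. Standing assumptions: $\mathbf{Var}[Y]\in(0,\infty)$, and $\mathbf{Cov}[Y,w\circ F_Y(Y)]$ is finite and nonzero. The classical beta is $\beta=\mathbf{Cov}[X,Y]/\mathbf{Var}[Y]$. The weighted-Gini beta is $\beta_G=\mathbf{Cov}[X,w\circ F_Y(Y)]/\mathbf{Cov}[Y,w\circ F_Y(Y)]$. Set $\Delta=\beta_G-\beta$. For $n\ge1$, define $\widehat F_Y(y)=\frac{1}{n+1}\sum_{k=1}^n\mathbf{1}\{Y_k\le y\}$ (jumps of size $1/(n+1)$). Let $\overline X=n^{-1}\sum_{k=1}^n X_k$, $\overline Y=n^{-1}\sum_{k=1}^n Y_k$, and $\overline z_0=n^{-1}\sum_{k=1}^n w\circ\widehat F_Y(Y_k)$. Define $\widehat\beta_{G,n}=\frac{\sum_{k=1}^n (X_k-\overline X)(w\circ\widehat F_Y(Y_k)-\overline z_0)}{\sum_{k=1}^n (Y_k-\overline Y)(w\circ\widehat F_Y(Y_k)-\overline z_0)}$, $\widehat\beta_n=\frac{\sum_{k=1}^n (X_k-\overline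 X)(Y_k-\overline Y)}{\sum_{k=1}^n (Y_k-\overline Y)^2}$, and $\widehat\Delta_n=\widehat\beta_{G,n}-\widehat\beta_n$. *)

theory Defs
  imports "HOL-Probability.Probability"
begin

definition covar :: "'a measure \<Rightarrow> ('a \<Rightarrow> real) \<Rightarrow> ('a \<Rightarrow> real) \<Rightarrow> real" where
  "covar M U V = (\<integral>\<omega>. (U \<omega> - (\<integral>x. U x \<partial>M)) * (V \<omega> - (\<integral>x. V x \<partial>M)) \<partial>M)"

definition var :: "'a measure \<Rightarrow> ('a \<Rightarrow> real) \<Rightarrow> real" where
  "var M U = (\<integral>\<omega>. (U \<omega> - (\<integral>x. U x \<partial>M))\<^sup>2 \<partial>M)"

definition cdf_of :: "'a measure \<Rightarrow> ('a \<Rightarrow> real) \<Rightarrow> real \<Rightarrow> real" where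
  "cdf_of M Y = cdf (distr M borel Y)"

definition beta_cl :: "'a measure \<Rightarrow> ('a \<Rightarrow> real) \<Rightarrow> ('a \<Rightarrow> real) \<Rightarrow> real" where
  "beta_cl M X Y = covar M X Y / var M Y"

definition beta_G :: "'a measure \<Rightarrow> (real \<Rightarrow> real) \<Rightarrow> ('a \<Rightarrow> real) \<Rightarrow> ('a \<Rightarrow> real) \<Rightarrow> real" where
  "beta_G M w X Y = covar M X (\<lambda>\<omega>. w (cdf_of M Y (Y \<omega>)))
                    / covar M Y (\<lambda>\<omega>. w (cdf_of M Y (Y \<omega>)))"

definition Delta :: "'a measure \<Rightarrow> (real \<Rightarrow> real) \<Rightarrow> ('a \<Rightarrow> real) \<Rightarrow> ('a \<Rightarrow> real) \<Rightarrow> real" where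
  "Delta M w X Y = beta_G M w X Y - beta_cl M X Y"

definition emp_cdf :: "nat \<Rightarrow> (nat \<Rightarrow> real) \<Rightarrow> real \<Rightarrow> real" where
  "emp_cdf n ys y = (\<Sum>k=1..n. if ys k \<le> y then 1 else 0) / (real n + 1)"

definition mean_n :: "nat \<Rightarrow> (nat \<Rightarrow> real) \<Rightarrow> real" where
  "mean_n n xs = (\<Sum>k=1..n. xs k) / real n"

definition beta_G_hat :: "(real \<Rightarrow> real) \<Rightarrow> nat \<Rightarrow> (nat \<Rightarrow> real) \<Rightarrow> (nat \<Rightarrow> real) \<Rightarrow> real" where
  "beta_G_hat w n xs ys =
     (let z = (\<lambda>k. w (emp_cdf n ys (ys k))); z0 = mean_n n z in
      (\<Sum>k=1..n. (xs k - mean_n n xs) * (z k - z0))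
      / (\<Sum>k=1..n. (ys k - mean_n n ys) * (z k - z0)))"

definition beta_hat :: "nat \<Rightarrow> (nat \<Rightarrow> real) \<Rightarrow> (nat \<Rightarrow> real) \<Rightarrow> real" where
  "beta_hat n xs ys =
     (\<Sum>k=1..n. (xs k - mean_n n xs) * (ys k - mean_n n ys))
     / (\<Sum>k=1..n. (ys k - mean_n n ys)\<^sup>2)"

definition Delta_hat :: "(real \<Rightarrow> real) \<Rightarrow> nat \<Rightarrow> (nat \<Rightarrow> real) \<Rightarrow> (nat \<Rightarrow> real) \<Rightarrow> real" where
  "Delta_hat w n xs ys = beta_G_hat w n xs ys - beta_hat n xs ys"

end

theory Submission
  imports Defs
begin


lemma cesaro:
  fixes a :: "nat \<Rightarrow> real"
  assumes "a \<longlonglongrightarrow> L"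
  shows "(\<lambda>n. (\<Sum>i=1..n. a i) / real n) \<longlonglongrightarrow> L"
proof (rule LIMSEQ_I)
  fix r :: real assume r: "r > 0"
  obtain N where N: "\<And>n. n \<ge> N \<Longrightarrow> norm (a n - L) < r/2"
    using LIMSEQ_D[OF assms, of "r/2"] r by auto
  define C where "C = (\<Sum>i=1..N. \<bar>a i - L\<bar>)"
  have C0: "C \<ge> 0" unfolding C_def by (auto intro: sum_nonneg)
  obtain N2 :: nat where N2: "real N2 > 2 * C / r" using reals_Archimedean2 by blast
  show "\<exists>no. \<forall>n\<ge>no. norm ((\<Sum>i = 1..n. a i) / real n - L) < r"
  proof (intro exI[of _ "N + N2 + 1"] allI impI)
    fix n assume n: "n \<ge> N + N2 + 1"
    have npos: "real n > 0" using n by auto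
    have "(\<Sum>i = 1..n. a i) / real n - L = (\<Sum>i = 1..n. a i - L) / real n"
      using npos by (simp add: sum_subtractf field_simps)
    also have "(\<Sum>i = 1..n. a i - L) = (\<Sum>i = 1..N. a i - L) + (\<Sum>i = Suc N..n. a i - L)"
    proof -
      have "{1..n} = {1..N} \<union> {Suc N..n}" using n by auto
      then show ?thesis by (simp add: sum.union_disjoint)
    qed
    finally have eq: "(\<Sum>i = 1..n. a i) / real n - L = ((\<Sum>i = 1..N. a i - L) + (\<Sum>i = Suc N..n. a i - L)) / real n" .
    have b1: "\<bar>\<Sum>i = 1..N. a i - L\<bar> \<le> C" unfolding C_def by (rule sum_abs)
    have "\<bar>\<Sum>i = Suc N..n. a i - L\<bar> \<le> (\<Sum>i = Suc N..n. \<bar>a i - L\<bar>)" by (rule sum_abs)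
    also have "\<dots> \<le> (\<Sum>i = Suc N..n. r/2)"
      by (rule sum_mono) (use N in \<open>auto simp: less_imp_le\<close>)
    also have "\<dots> \<le> real n * (r/2)" using r by auto
    finally have b2: "\<bar>\<Sum>i = Suc N..n. a i - L\<bar> \<le> real n * (r / 2)" .
    have "C < real n * (r/2)"
    proof -
      have "C < real N2 * r / 2" using N2 r by (simp add: field_simps)
      also have "\<dots> \<le> real n * (r/2)" using n r by (auto intro!: mult_right_mono)
      finally show ?thesis .
    qed
    then have "\<bar>(\<Sum>i = 1..N. a i - L) + (\<Sum>i = Suc N..n. a i - L)\<bar> < real n * r"
      using b1 b2 by linarith
    then show "norm ((\<Sum>i = 1..n. a i) / real n - L) < r"
      unfolding eq using npos by (simp add: abs_divide pos_divide_less_eq mult.commute)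
  qed
qed


fun geo_seq :: "real \<Rightarrow> nat \<Rightarrow> nat" where
  "geo_seq a 0 = 1"
| "geo_seq a (Suc n) = max (geo_seq a n + 1) (nat \<lceil>a * real (geo_seq a n)\<rceil>)"

lemma geo_seq_ge: "geo_seq a n \<ge> n + 1"
  by (induction n) auto

lemma geo_seq_Suc_gt: "geo_seq a n < geo_seq a (Suc n)"
  by auto

lemma geo_seq_strict_mono: "strict_mono (geo_seq a)"
  by (rule strict_monoI_Suc) (rule geo_seq_Suc_gt)

lemma geo_seq_lower: "a * real (geo_seq a n) \<le> real (geo_seq a (Suc n))"
proof -
  have "a * real (geo_seq a n) \<le> real (nat \<lceil>a * real (geo_seq a n)\<rceil>)"
    by linarith
  also have "\<dots> \<le> real (geo_seq a (Suc n))" by simp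
  finally show ?thesis .
qed

lemma geo_seq_upper:
  assumes "a \<ge> 1"
  shows "real (geo_seq a (Suc n)) \<le> a * real (geo_seq a n) + 1"
proof -
  have "real (geo_seq a n) \<le> a * real (geo_seq a n)" using assms
    by (metis mult_le_cancel_right1 of_nat_0_le_iff order.trans linorder_not_less)
  moreover have "real (nat \<lceil>a * real (geo_seq a n)\<rceil>) \<le> a * real (geo_seq a n) + 1"
  proof -
    have "0 \<le> a * real (geo_seq a n)" using assms by simp
    then have "0 \<le> \<lceil>a * real (geo_seq a n)\<rceil>" by linarith
    then have "real (nat \<lceil>a * real (geo_seq a n)\<rceil>) = of_int \<lceil>a * real (geo_seq a n)\<rceil>"
      by simp
    then show ?thesis by linarith
  qed
  moreover have "real (geo_seq a (Suc n)) = max (real (geo_seq a n) + 1) (real (nat \<lceil>a * real (geo_seq a n)\<rceil>))"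
    by (simp add: of_nat_max)
  ultimately show ?thesis by (simp add: max_def)
qed

lemma geo_seq_pow:
  assumes "a \<ge> 1" "m \<le> n"
  shows "a ^ (n - m) * real (geo_seq a m) \<le> real (geo_seq a n)"
  using assms(2)
proof (induction n)
  case 0 then show ?case by simp
next
  case (Suc n)
  show ?case
  proof (cases "m = Suc n")
    case True then show ?thesis by simp
  next
    case False
    then have mn: "m \<le> n" using Suc by auto
    have "a ^ (Suc n - m) * real (geo_seq a m) = a * (a ^ (n - m) * real (geo_seq a m))"
      using mn by (simp add: Suc_diff_le)
    also have "\<dots> \<le> a * real (geo_seq a n)"
      using Suc.IH[OF mn] assms by (auto intro: mult_left_mono)
    also have "\<dots> \<le> real (geo_seq a (Suc n))" by (rule geo_seq_lower)
    finally show ?thesis .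
  qed
qed

lemma geo_sum_bound:
  assumes a: "a > 1" and i: "i \<ge> (1::nat)"
  shows "(\<Sum>n\<in>{n. n < N \<and> geo_seq a n \<ge> i}. 1 / (real (geo_seq a n))\<^sup>2)
          \<le> a\<^sup>2 / (a\<^sup>2 - 1) / (real i)\<^sup>2"
proof (cases "{n. n < N \<and> geo_seq a n \<ge> i} = {}")
  case True
  have "1 < a\<^sup>2" using a by (metis less_1_mult power2_eq_square)
  then have "0 \<le> a\<^sup>2 / (a\<^sup>2 - 1) / (real i)\<^sup>2" by simp
  then show ?thesis unfolding True by simp
next
  case False
  define S where "S = {n. n < N \<and> geo_seq a n \<ge> i}"
  have finS: "finite S" unfolding S_def by auto
  define n0 where "n0 = Min S"
  have n0S: "n0 \<in> S" unfolding n0_def using False finS S_def by (metis Min_in)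
  have n0le: "\<And>n. n \<in> S \<Longrightarrow> n0 \<le> n" unfolding n0_def using finS by auto
  define b where "b = 1 / a\<^sup>2"
  have "1 < a * a" using a by (metis less_1_mult order.strict_trans zero_less_one)
  then have b0: "0 \<le> b" "b < 1" unfolding b_def using a by (auto simp: power2_eq_square)
  have "(\<Sum>n\<in>S. 1 / (real (geo_seq a n))\<^sup>2) \<le> (\<Sum>n\<in>S. b ^ (n - n0) / (real i)\<^sup>2)"
  proof (rule sum_mono)
    fix n assume nS: "n \<in> S"
    have ipos: "real i > 0" using i by auto
    have "a ^ (n - n0) * real i \<le> a ^ (n - n0) * real (geo_seq a n0)"
      using n0S a by (auto simp: S_def intro!: mult_left_mono)
    also have "\<dots> \<le> real (geo_seq a n)" using geo_seq_pow[of a n0 n] a n0le[OF nS] by auto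
    finally have h: "a ^ (n - n0) * real i \<le> real (geo_seq a n)" .
    have pos: "0 < a ^ (n - n0) * real i" using a ipos by auto
    have "1 / (real (geo_seq a n))\<^sup>2 \<le> 1 / (a ^ (n - n0) * real i)\<^sup>2"
      using h pos ipos a geo_seq_ge[where a=a and n=n] by (intro divide_left_mono power_mono) (auto intro!: mult_pos_pos)
    also have "\<dots> = b ^ (n - n0) / (real i)\<^sup>2"
      unfolding b_def by (simp add: power_mult_distrib power_divide power_one_over field_simps power_mult[symmetric] mult.commute)
    finally show "1 / (real (geo_seq a n))\<^sup>2 \<le> b ^ (n - n0) / (real i)\<^sup>2" .
  qed
  also have "\<dots> = (\<Sum>n\<in>S. b ^ (n - n0)) / (real i)\<^sup>2" by (simp add: sum_divide_distrib)
  also have "(\<Sum>n\<in>S. b ^ (n - n0)) \<le> (\<Sum>n\<in>{n0..<N}. b ^ (n - n0))"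
    using n0le b0 by (intro sum_mono2) (auto simp: S_def)
  also have "(\<Sum>n\<in>{n0..<N}. b ^ (n - n0)) = (\<Sum>d<N - n0. b ^ d)"
  proof -
    have "(\<Sum>n\<in>{n0..<N}. b ^ (n - n0)) = (\<Sum>d\<in>{0..<N - n0}. b ^ d)"
      by (rule sum.reindex_bij_witness[of _ "\<lambda>d. d + n0" "\<lambda>n. n - n0"]) auto
    then show ?thesis by (simp add: atLeast0LessThan)
  qed
  also have "\<dots> \<le> 1 / (1 - b)"
  proof -
    have "(\<Sum>d<N - n0. b ^ d) = (1 - b ^ (N - n0)) / (1 - b)"
      using b0 by (simp add: sum_gp_strict)
    also have "\<dots> \<le> 1 / (1 - b)" using b0 by (intro divide_right_mono) auto
    finally show ?thesis .
  qed
  also have "1 / (1 - b) = a\<^sup>2 / (a\<^sup>2 - 1)"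
    unfolding b_def using a by (simp add: field_simps)
  finally show ?thesis
    unfolding S_def using a by (simp add: divide_right_mono)
qed


lemma sq_trunc_sum_aux:
  fixes z :: real assumes z: "z \<ge> 0"
  shows "(\<Sum>i=1..K. if z \<le> real i then z\<^sup>2 / (real i)\<^sup>2 else 0)
          \<le> 2 * z - (if z \<le> real K then 2 * z\<^sup>2 / (real K + 1) else 0)"
proof (induction K)
  case 0
  then show ?case using z by auto
next
  case (Suc K)
  have split: "(\<Sum>i=1..Suc K. if z \<le> real i then z\<^sup>2 / (real i)\<^sup>2 else 0)
     = (\<Sum>i=1..K. if z \<le> real i then z\<^sup>2 / (real i)\<^sup>2 else 0)
       + (if z \<le> real K + 1 then z\<^sup>2 / (real K + 1)\<^sup>2 else 0)"
    by (simp add: add.commute)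
  consider "z \<le> real K" | "real K < z" "z \<le> real K + 1" | "real K + 1 < z" by linarith
  then show ?case
  proof cases
    case 1
    have k: "z\<^sup>2 / (real K + 1)\<^sup>2 \<le> 2 * z\<^sup>2 / (real K + 1) - 2 * z\<^sup>2 / (real K + 2)"
    proof -
      have "2 * z\<^sup>2 / (real K + 1) - 2 * z\<^sup>2 / (real K + 2) = 2 * z\<^sup>2 / ((real K + 1) * (real K + 2))"
        by (simp add: field_simps)
      also have "z\<^sup>2 / (real K + 1)\<^sup>2 \<le> \<dots>"
      proof -
        have "z\<^sup>2 / (real K + 1)\<^sup>2 = z\<^sup>2 * (1 / ((real K + 1) * (real K + 1)))"
          by (simp add: power2_eq_square)
        also have "\<dots> \<le> z\<^sup>2 * (2 / ((real K + 1) * (real K + 2)))"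
        proof (rule mult_left_mono)
          show "1 / ((real K + 1) * (real K + 1)) \<le> 2 / ((real K + 1) * (real K + 2))"
            by (simp add: divide_simps algebra_simps)
        qed simp
        finally show ?thesis by (simp add: mult.commute)
      qed
      finally show ?thesis .
    qed
    show ?thesis using Suc.IH 1 k unfolding split by (simp add: add.commute)
  next
    case 2
    have zpos: "z > 0" using 2 by simp
    have q: "z / (real K + 1) \<le> 1" "0 \<le> z / (real K + 1)" using 2 zpos by auto
    have a1: "z\<^sup>2 / (real K + 1)\<^sup>2 \<le> z / (real K + 1)"
    proof -
      have "z\<^sup>2 / (real K + 1)\<^sup>2 = (z / (real K + 1)) * (z / (real K + 1))"
        by (simp add: power2_eq_square)
      also have "\<dots> \<le> (z / (real K + 1)) * 1" using q by (intro mult_left_mono) auto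
      finally show ?thesis by simp
    qed
    have a2: "2 * z\<^sup>2 / (real K + 2) \<le> 2 * z * (real K + 1) / (real K + 2)"
    proof -
      have "z * z \<le> z * (real K + 1)" using 2 zpos by (intro mult_left_mono) auto
      then show ?thesis by (intro divide_right_mono) (auto simp: power2_eq_square)
    qed
    have a3: "z / (real K + 1) + 2 * z * (real K + 1) / (real K + 2) \<le> 2 * z"
    proof -
      have "z / (real K + 1) + 2 * z * (real K + 1) / (real K + 2)
          = z * (1 / (real K + 1) + 2 - 2 / (real K + 2))" by (simp add: field_simps)
      also have "\<dots> \<le> z * 2"
      proof (rule mult_left_mono)
        have "1 / (real K + 1) \<le> 2 / (real K + 2)" by (simp add: divide_simps)
        then show "1 / (real K + 1) + 2 - 2 / (real K + 2) \<le> 2" by linarith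
      qed (use zpos in auto)
      finally show ?thesis by simp
    qed
    show ?thesis using Suc.IH 2 a1 a2 a3 unfolding split by (simp add: add.commute)
  next
    case 3
    show ?thesis using Suc.IH 3 unfolding split by (simp add: add.commute)
  qed
qed

lemma sq_trunc_sum:
  fixes z :: real assumes z: "z \<ge> 0"
  shows "(\<Sum>i=1..K. if z \<le> real i then z\<^sup>2 / (real i)\<^sup>2 else 0) \<le> 2 * z"
proof -
  have "0 \<le> (if z \<le> real K then 2 * z\<^sup>2 / (real K + 1) else 0)" by auto
  then show ?thesis using sq_trunc_sum_aux[OF z, of K] by linarith
qed

lemma count_sum_aux:
  fixes z :: real assumes z: "z \<ge> 0"
  shows "(\<Sum>i=1..K. if real i < z then 1 else 0) \<le> min (real K) z"
proof (induction K)
  case 0 then show ?case using z by auto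
next
  case (Suc K)
  have split: "(\<Sum>i=1..Suc K. if real i < z then 1 else (0::real))
     = (\<Sum>i=1..K. if real i < z then 1 else 0) + (if real K + 1 < z then 1 else 0)"
    by (simp add: add.commute)
  show ?case using Suc.IH unfolding split by (auto simp: min_def split: if_splits)
qed

lemma count_sum:
  fixes z :: real assumes z: "z \<ge> 0"
  shows "(\<Sum>i=1..K. if real i < z then 1 else 0) \<le> z"
  using count_sum_aux[OF z, of K] by linarith


definition alpha_j :: "nat \<Rightarrow> real" where "alpha_j j = 1 + 1 / (real j + 1)"

lemma interp:
  fixes s :: "nat \<Rightarrow> real" and \<mu> :: real
  assumes mono: "\<And>m n. m \<le> n \<Longrightarrow> s m \<le> s n"
    and nonneg: "\<And>n. s n \<ge> 0"
    and lim: "\<And>j. (\<lambda>n. s (geo_seq (alpha_j j) n) / real (geo_seq (alpha_j j) n)) \<longlonglongrightarrow> \<mu>"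
  shows "(\<lambda>m. s m / real m) \<longlonglongrightarrow> \<mu>"
proof (rule LIMSEQ_I)
  fix \<epsilon> :: real assume eps: "\<epsilon> > 0"
  define d where "d = (\<lambda>j::nat. 1 / (real j + 1))"
  have d0: "d \<longlonglongrightarrow> 0" unfolding d_def using LIMSEQ_inverse_real_of_nat by (simp add: inverse_eq_divide add.commute)
  have f: "(\<lambda>j. (\<mu> + d j) * (1 + 2 * d j)) \<longlonglongrightarrow> (\<mu> + 0) * (1 + 2 * 0)"
    by (intro tendsto_intros d0)
  have g: "(\<lambda>j. (\<mu> - d j) / (1 + 2 * d j)) \<longlonglongrightarrow> (\<mu> - 0) / (1 + 2 * 0)"
    by (intro tendsto_intros d0) simp
  have "eventually (\<lambda>j. (\<mu> + d j) * (1 + 2 * d j) < \<mu> + \<epsilon>) sequentially"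
    using f eps by (auto intro: order_tendstoD)
  moreover have "eventually (\<lambda>j. (\<mu> - d j) / (1 + 2 * d j) > \<mu> - \<epsilon>) sequentially"
    using g eps by (auto intro: order_tendstoD)
  ultimately have "eventually (\<lambda>j. (\<mu> + d j) * (1 + 2 * d j) < \<mu> + \<epsilon> \<and> (\<mu> - d j) / (1 + 2 * d j) > \<mu> - \<epsilon>) sequentially"
    by (rule eventually_conj)
  then obtain N0 where "\<forall>j\<ge>N0. (\<mu> + d j) * (1 + 2 * d j) < \<mu> + \<epsilon> \<and> (\<mu> - d j) / (1 + 2 * d j) > \<mu> - \<epsilon>"
    unfolding eventually_sequentially by blast
  then obtain j where fj: "(\<mu> + d j) * (1 + 2 * d j) < \<mu> + \<epsilon>"
      and gj: "(\<mu> - d j) / (1 + 2 * d j) > \<mu> - \<epsilon>"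
    by blast
  define a where "a = alpha_j j"
  define \<delta> where "\<delta> = d j"
  have a_eq: "a = 1 + \<delta>" unfolding a_def \<delta>_def d_def alpha_j_def by simp
  have ad: "a + \<delta> = 1 + 2 * \<delta>" unfolding a_eq by simp
  have dpos: "\<delta> > 0" unfolding \<delta>_def d_def by simp
  define kk where "kk = geo_seq a"
  have kkpos: "\<And>n. real (kk n) \<ge> real n + 1" unfolding kk_def using geo_seq_ge
    by (metis of_nat_1 of_nat_add of_nat_mono)
  obtain N1 where N1: "\<And>n. n \<ge> N1 \<Longrightarrow> norm (s (kk n) / real (kk n) - \<mu>) < \<delta>"
    using LIMSEQ_D[OF lim[of j] dpos] unfolding kk_def a_def by auto
  define N where "N = max N1 j"
  show "\<exists>no. \<forall>m\<ge>no. norm (s m / real m - \<mu>) < \<epsilon>"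
  proof (intro exI[of _ "kk N"] allI impI)
    fix m assume m: "m \<ge> kk N"
    define A where "A = {n. kk n \<le> m}"
    have finA: "finite A"
    proof -
      have "\<And>n. kk n \<le> m \<Longrightarrow> n \<le> m"
      proof -
        fix n assume "kk n \<le> m"
        moreover have "n \<le> kk n" using geo_seq_ge[where a=a and n=n] unfolding kk_def by simp
        ultimately show "n \<le> m" by simp
      qed
      then have "A \<subseteq> {..m}" unfolding A_def by auto
      then show ?thesis by (rule finite_subset) auto
    qed
    have NA: "N \<in> A" unfolding A_def using m by simp
    define n where "n = Max A"
    have nA: "n \<in> A" unfolding n_def using finA NA by (metis Max_in empty_iff)
    have Nn: "N \<le> n" unfolding n_def using finA NA by simp
    have notA: "Suc n \<notin> A" using finA Max_ge[OF finA, of "Suc n"] unfolding n_def[symmetric] by auto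
    have kn: "kk n \<le> m" using nA A_def by simp
    have kn1: "m < kk (Suc n)" using notA A_def by simp
    have kn_pos: "real (kk n) > 0" using kkpos[of n] by linarith
    have mpos: "real m > 0" using kn kn_pos by linarith
    have n1: "n \<ge> N1" "Suc n \<ge> N1" using Nn N_def by auto
    have r0: "\<bar>s (kk n) / real (kk n) - \<mu>\<bar> < \<delta>" using N1[OF n1(1)] by simp
    have r1: "\<bar>s (kk (Suc n)) / real (kk (Suc n)) - \<mu>\<bar> < \<delta>" using N1[OF n1(2)] by simp
    have ratio: "real (kk (Suc n)) \<le> (a + \<delta>) * real (kk n)"
    proof -
      have "real (kk (Suc n)) \<le> a * real (kk n) + 1"
        unfolding kk_def by (rule geo_seq_upper) (simp add: a_eq dpos less_imp_le)
      also have "1 \<le> \<delta> * real (kk n)"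
      proof -
        have "real j + 1 \<le> real (kk n)" using kkpos[of n] Nn N_def by auto
        then show ?thesis unfolding \<delta>_def d_def by (simp add: field_simps)
      qed
      finally show ?thesis by (simp add: algebra_simps)
    qed
    have apos: "a + \<delta> > 0" using a_eq dpos by simp
    have upper: "s m / real m < \<mu> + \<epsilon>"
    proof -
      have "s m \<le> s (kk (Suc n))" using kn1 by (intro mono) simp
      also have "s (kk (Suc n)) = (s (kk (Suc n)) / real (kk (Suc n))) * real (kk (Suc n))"
        using kkpos[of "Suc n"] by (simp add: field_simps)
      also have "\<dots> \<le> (\<mu> + \<delta>) * ((a + \<delta>) * real (kk n))"
      proof (rule mult_mono)
        show "s (kk (Suc n)) / real (kk (Suc n)) \<le> \<mu> + \<delta>" using r1 by linarith
        show "0 \<le> \<mu> + \<delta>"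
          using r1 nonneg[of "kk (Suc n)"] kkpos[of "Suc n"] by (smt (verit) divide_nonneg_nonneg of_nat_0_le_iff)
      qed (use ratio in auto)
      finally have "s m \<le> (\<mu> + \<delta>) * (a + \<delta>) * real (kk n)" by (simp add: mult.assoc)
      then have "s m / real m \<le> (\<mu> + \<delta>) * (a + \<delta>) * real (kk n) / real m"
        using mpos by (simp add: divide_right_mono)
      also have "\<dots> \<le> (\<mu> + \<delta>) * (a + \<delta>)"
      proof -
        have nn: "0 \<le> (\<mu> + \<delta>) * (a + \<delta>)"
          using r1 nonneg[of "kk (Suc n)"] kkpos[of "Suc n"] apos
          by (smt (verit) divide_nonneg_nonneg of_nat_0_le_iff mult_nonneg_nonneg)
        have "real (kk n) / real m \<le> 1" using kn mpos by simp
        then have "(\<mu> + \<delta>) * (a + \<delta>) * (real (kk n) / real m) \<le> (\<mu> + \<delta>) * (a + \<delta>) * 1"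
          using nn by (intro mult_left_mono) auto
        then show ?thesis by simp
      qed
      also have "(\<mu> + \<delta>) * (a + \<delta>) < \<mu> + \<epsilon>" by (subst ad) (simp only: \<delta>_def fj)
      finally show ?thesis .
    qed
    have lower: "s m / real m > \<mu> - \<epsilon>"
    proof (cases "\<mu> - \<delta> \<ge> 0")
      case False
      have "(\<mu> - \<delta>) / (a + \<delta>) < 0" using False apos by (simp add: divide_neg_pos)
      moreover have "s m / real m \<ge> 0" using nonneg mpos by simp
      moreover have "(\<mu> - \<delta>) / (a + \<delta>) > \<mu> - \<epsilon>" by (subst ad) (simp only: \<delta>_def gj)
      ultimately show ?thesis by linarith
    next
      case True
      have "(\<mu> - \<delta>) * real (kk n) \<le> s (kk n)"
      proof -
        have "\<mu> - \<delta> \<le> s (kk n) / real (kk n)" using r0 by linarith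
        then show ?thesis using kn_pos by (simp add: field_simps)
      qed
      also have "s (kk n) \<le> s m" using kn by (rule mono)
      finally have sm: "(\<mu> - \<delta>) * real (kk n) \<le> s m" .
      have "real m \<le> (a + \<delta>) * real (kk n)" using kn1 ratio by linarith
      have "(\<mu> - \<delta>) / (a + \<delta>) = (\<mu> - \<delta>) * real (kk n) / ((a + \<delta>) * real (kk n))"
        using kn_pos by simp
      also have "\<dots> \<le> s m / ((a + \<delta>) * real (kk n))"
        using sm apos kn_pos by (intro divide_right_mono) auto
      also have "\<dots> \<le> s m / real m"
        using \<open>real m \<le> (a + \<delta>) * real (kk n)\<close> mpos nonneg[of m]
        by (intro divide_left_mono) auto
      finally have "(\<mu> - \<delta>) / (a + \<delta>) \<le> s m / real m" .
      moreover have "(\<mu> - \<delta>) / (a + \<delta>) > \<mu> - \<epsilon>" by (subst ad) (simp only: \<delta>_def gj)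
      ultimately show ?thesis by linarith
    qed
    show "norm (s m / real m - \<mu>) < \<epsilon>" using upper lower by auto
  qed
qed


definition trunc :: "nat \<Rightarrow> real \<Rightarrow> real" where
  "trunc i z = (if z \<le> real i then z else 0)"

lemma trunc_borel[measurable]: "trunc i \<in> borel_measurable borel"
  unfolding trunc_def by measurable

context prob_space begin

lemma transfer_integral:
  fixes U V :: "'a \<Rightarrow> 'b::topological_space" and f :: "'b \<Rightarrow> real"
  assumes dist: "distr M borel U = distr M borel V"
    and U[measurable]: "U \<in> borel_measurable M" and V[measurable]: "V \<in> borel_measurable M"
    and f[measurable]: "f \<in> borel_measurable borel"
  shows "(\<integral>\<omega>. f (U \<omega>) \<partial>M) = (\<integral>\<omega>. f (V \<omega>) \<partial>M)"
proof -
  have "(\<integral>\<omega>. f (U \<omega>) \<partial>M) = integral\<^sup>L (distr M borel U) f" by (rule integral_distr[symmetric]) auto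
  also have "\<dots> = integral\<^sup>L (distr M borel V) f" by (simp add: dist)
  also have "\<dots> = (\<integral>\<omega>. f (V \<omega>) \<partial>M)" by (rule integral_distr) auto
  finally show ?thesis .
qed

lemma transfer_integrable:
  fixes U V :: "'a \<Rightarrow> 'b::topological_space" and f :: "'b \<Rightarrow> real"
  assumes dist: "distr M borel U = distr M borel V"
    and U[measurable]: "U \<in> borel_measurable M" and V[measurable]: "V \<in> borel_measurable M"
    and f[measurable]: "f \<in> borel_measurable borel"
    and "integrable M (\<lambda>\<omega>. f (V \<omega>))"
  shows "integrable M (\<lambda>\<omega>. f (U \<omega>))"
proof -
  have "integrable (distr M borel V) f" using assms by (subst integrable_distr_eq) auto
  then have "integrable (distr M borel U) f" by (simp add: dist)
  then show ?thesis by (subst (asm) integrable_distr_eq) auto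
qed

lemma transfer_prob:
  fixes U V :: "'a \<Rightarrow> 'b::topological_space"
  assumes dist: "distr M borel U = distr M borel V"
    and U[measurable]: "U \<in> borel_measurable M" and V[measurable]: "V \<in> borel_measurable M"
    and S: "S \<in> sets borel"
  shows "prob {\<omega>\<in>space M. U \<omega> \<in> S} = prob {\<omega>\<in>space M. V \<omega> \<in> S}"
proof -
  have "prob {\<omega>\<in>space M. U \<omega> \<in> S} = measure (distr M borel U) S"
    using S by (simp add: measure_distr vimage_def Int_def conj_commute)
  also have "\<dots> = measure (distr M borel V) S" by (simp add: dist)
  also have "\<dots> = prob {\<omega>\<in>space M. V \<omega> \<in> S}"
    using S by (simp add: measure_distr vimage_def Int_def conj_commute)
  finally show ?thesis .
qed

lemma bounded_integrable:
  fixes f :: "'a \<Rightarrow> real"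
  assumes "f \<in> borel_measurable M" "\<And>\<omega>. \<omega> \<in> space M \<Longrightarrow> \<bar>f \<omega>\<bar> \<le> B"
  shows "integrable M f"
  using assms by (intro integrable_const_bound[where B=B]) auto

lemma slln_nonneg:
  fixes Z :: "'a \<Rightarrow> real" and Zs :: "nat \<Rightarrow> 'a \<Rightarrow> real"
  assumes ind: "indep_vars (\<lambda>_. borel) Zs {1..}"
    and dist: "\<And>i. i \<ge> 1 \<Longrightarrow> distr M borel (Zs i) = distr M borel Z"
    and Zm[measurable]: "Z \<in> borel_measurable M"
    and nnZ: "\<And>\<omega>. Z \<omega> \<ge> 0" and nnZs: "\<And>i \<omega>. Zs i \<omega> \<ge> 0"
    and intZ: "integrable M Z"
  shows "AE \<omega> in M. (\<lambda>n. (\<Sum>k=1..n. Zs k \<omega>) / real n) \<longlonglongrightarrow> expectation Z"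
proof -
  have Zsm: "\<And>i. i \<ge> 1 \<Longrightarrow> Zs i \<in> borel_measurable M"
    using ind unfolding indep_vars_def by auto
  define \<mu> where "\<mu> = expectation Z"
  define m where "m i = expectation (\<lambda>\<omega>. trunc i (Z \<omega>))" for i
  define q where "q i = expectation (\<lambda>\<omega>. (trunc i (Z \<omega>))\<^sup>2)" for i
  define T where "T i \<omega> = trunc i (Zs i \<omega>)" for i \<omega>
  define U where "U N \<omega> = (\<Sum>i=1..N. T i \<omega> - m i)" for N \<omega>
  have Tm: "\<And>i. i \<ge> 1 \<Longrightarrow> T i \<in> borel_measurable M"
    unfolding T_def using Zsm by (auto intro: measurable_compose[OF _ trunc_borel])
  have trunc_bd: "\<And>i z. z \<ge> 0 \<Longrightarrow> \<bar>trunc i z\<bar> \<le> real i"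
    unfolding trunc_def by auto
  have trunc_bd2: "\<And>i z. z \<ge> 0 \<Longrightarrow> \<bar>trunc i z\<bar> \<le> z"
    unfolding trunc_def by auto
  have Tb: "\<And>i \<omega>. \<bar>T i \<omega>\<bar> \<le> real i" unfolding T_def using trunc_bd nnZs by auto
  have Tint: "\<And>i. i \<ge> 1 \<Longrightarrow> integrable M (T i)"
    using Tm Tb by (intro bounded_integrable) auto
  have Tint2: "\<And>i. i \<ge> 1 \<Longrightarrow> integrable M (\<lambda>\<omega>. (T i \<omega>)\<^sup>2)"
  proof -
    fix i :: nat assume i: "i \<ge> 1"
    show "integrable M (\<lambda>\<omega>. (T i \<omega>)\<^sup>2)"
    proof (rule bounded_integrable[where B="(real i)\<^sup>2"])
      show "(\<lambda>\<omega>. (T i \<omega>)\<^sup>2) \<in> borel_measurable M" using Tm[OF i] by measurable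
      fix \<omega> show "\<bar>(T i \<omega>)\<^sup>2\<bar> \<le> (real i)\<^sup>2"
        using Tb[of i \<omega>] abs_le_square_iff[of "T i \<omega>" "real i"] by simp
    qed
  qed
  have ET: "\<And>i. i \<ge> 1 \<Longrightarrow> expectation (T i) = m i"
    unfolding T_def m_def using dist Zsm by (intro transfer_integral) auto
  have ET2: "\<And>i. i \<ge> 1 \<Longrightarrow> expectation (\<lambda>\<omega>. (T i \<omega>)\<^sup>2) = q i"
    unfolding T_def q_def using dist Zsm by (intro transfer_integral) auto
  have q0: "\<And>i. q i \<ge> 0" unfolding q_def by (rule integral_nonneg_AE) auto

  have m_lim: "m \<longlonglongrightarrow> \<mu>"
  proof -
    have "(\<lambda>i. expectation (\<lambda>\<omega>. trunc i (Z \<omega>))) \<longlonglongrightarrow> expectation Z"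
    proof (rule integral_dominated_convergence[where w=Z])
      show "AE x in M. (\<lambda>i. trunc i (Z x)) \<longlonglongrightarrow> Z x"
      proof (rule AE_I2)
        fix x
        have "eventually (\<lambda>i. trunc i (Z x) = Z x) sequentially"
          unfolding eventually_sequentially trunc_def
        proof (intro exI[of _ "nat \<lceil>Z x\<rceil>"] allI impI)
          fix n assume "n \<ge> nat \<lceil>Z x\<rceil>"
          then have "real n \<ge> real (nat \<lceil>Z x\<rceil>)" by simp
          moreover have "real (nat \<lceil>Z x\<rceil>) \<ge> Z x" by linarith
          ultimately show "(if Z x \<le> real n then Z x else 0) = Z x" by auto
        qed
        then show "(\<lambda>i. trunc i (Z x)) \<longlonglongrightarrow> Z x" by (rule tendsto_eventually)
      qed
      show "\<And>i. AE x in M. norm (trunc i (Z x)) \<le> Z x"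
        using trunc_bd2 nnZ by auto
    qed (use intZ in auto)
    then show ?thesis unfolding m_def \<mu>_def by (simp add: fun_eq_iff)
  qed
  have cesaro_m: "(\<lambda>n. (\<Sum>i=1..n. m i) / real n) \<longlonglongrightarrow> \<mu>"
    using cesaro[OF m_lim] .

  define V where "V i \<omega> = T i \<omega> - m i" for i \<omega>
  have Vm: "\<And>i. i \<ge> 1 \<Longrightarrow> V i \<in> borel_measurable M" unfolding V_def using Tm by auto
  have Vint: "\<And>i. i \<ge> 1 \<Longrightarrow> integrable M (V i)" unfolding V_def using Tint by auto
  have Vprod_int: "\<And>i j. i \<ge> 1 \<Longrightarrow> j \<ge> 1 \<Longrightarrow> integrable M (\<lambda>\<omega>. V i \<omega> * V j \<omega>)"
  proof -
    fix i j :: nat assume ij: "i \<ge> 1" "j \<ge> 1"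
    show "integrable M (\<lambda>\<omega>. V i \<omega> * V j \<omega>)"
    proof (rule bounded_integrable[where B="(real i + \<bar>m i\<bar>) * (real j + \<bar>m j\<bar>)"])
      show "(\<lambda>\<omega>. V i \<omega> * V j \<omega>) \<in> borel_measurable M" using Vm ij by auto
      fix \<omega>
      have "\<bar>V i \<omega>\<bar> \<le> real i + \<bar>m i\<bar>" unfolding V_def using Tb[of i \<omega>] by linarith
      moreover have "\<bar>V j \<omega>\<bar> \<le> real j + \<bar>m j\<bar>" unfolding V_def using Tb[of j \<omega>] by linarith
      ultimately show "\<bar>V i \<omega> * V j \<omega>\<bar> \<le> (real i + \<bar>m i\<bar>) * (real j + \<bar>m j\<bar>)"
        by (simp add: abs_mult mult_mono)
    qed
  qed
  have EV: "\<And>i. i \<ge> 1 \<Longrightarrow> expectation (V i) = 0"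
    unfolding V_def using Tint ET by (simp add: prob_space)
  have indV_all: "indep_vars (\<lambda>_. borel) V {1..}"
  proof -
    have "indep_vars (\<lambda>_. borel) (\<lambda>i \<omega>. (\<lambda>z. trunc i z - m i) (Zs i \<omega>)) {1..}"
      by (rule indep_vars_compose2[OF ind]) measurable
    then show ?thesis unfolding V_def T_def by simp
  qed
  have cross: "\<And>i j. i \<ge> 1 \<Longrightarrow> j \<ge> 1 \<Longrightarrow> i \<noteq> j \<Longrightarrow> expectation (\<lambda>\<omega>. V i \<omega> * V j \<omega>) = 0"
  proof -
    fix i j :: nat assume ij: "i \<ge> 1" "j \<ge> 1" "i \<noteq> j"
    have ind2: "indep_vars (\<lambda>_. borel) V {i, j}"
      using ij by (intro indep_vars_subset[OF indV_all]) auto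
    have "expectation (\<lambda>\<omega>. \<Prod>l\<in>{i,j}. V l \<omega>) = (\<Prod>l\<in>{i,j}. expectation (V l))"
      using ind2 Vint ij by (intro indep_vars_lebesgue_integral) auto
    then show "expectation (\<lambda>\<omega>. V i \<omega> * V j \<omega>) = 0"
      using ij EV by simp
  qed
  have varbound: "\<And>N. expectation (\<lambda>\<omega>. (U N \<omega>)\<^sup>2) \<le> (\<Sum>i=1..N. q i)"
  proof -
    fix N
    have sq: "\<And>\<omega>. (U N \<omega>)\<^sup>2 = (\<Sum>i=1..N. \<Sum>j=1..N. V i \<omega> * V j \<omega>)"
      unfolding U_def V_def power2_eq_square by (simp add: sum_product)
    have "expectation (\<lambda>\<omega>. (U N \<omega>)\<^sup>2) = (\<Sum>i=1..N. \<Sum>j=1..N. expectation (\<lambda>\<omega>. V i \<omega> * V j \<omega>))"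
    proof -
      have "expectation (\<lambda>\<omega>. \<Sum>i = 1..N. \<Sum>j = 1..N. V i \<omega> * V j \<omega>)
         = (\<Sum>i = 1..N. expectation (\<lambda>\<omega>. \<Sum>j = 1..N. V i \<omega> * V j \<omega>))"
        by (rule Bochner_Integration.integral_sum) (use Vprod_int in \<open>auto intro!: integrable_sum\<close>)
      also have "\<dots> = (\<Sum>i = 1..N. \<Sum>j = 1..N. expectation (\<lambda>\<omega>. V i \<omega> * V j \<omega>))"
        by (intro sum.cong refl Bochner_Integration.integral_sum) (use Vprod_int in auto)
      finally show ?thesis by (simp only: sq)
    qed
    also have "\<dots> = (\<Sum>i=1..N. expectation (\<lambda>\<omega>. V i \<omega> * V i \<omega>))"
    proof (rule sum.cong[OF refl])
      fix i assume i: "i \<in> {1..N}"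
      have "(\<Sum>j=1..N. expectation (\<lambda>\<omega>. V i \<omega> * V j \<omega>))
          = (\<Sum>j=1..N. if j = i then expectation (\<lambda>\<omega>. V i \<omega> * V i \<omega>) else 0)"
        using i cross by (intro sum.cong) auto
      also have "\<dots> = expectation (\<lambda>\<omega>. V i \<omega> * V i \<omega>)" using i by simp
      finally show "(\<Sum>j=1..N. expectation (\<lambda>\<omega>. V i \<omega> * V j \<omega>)) = expectation (\<lambda>\<omega>. V i \<omega> * V i \<omega>)" .
    qed
    also have "\<dots> \<le> (\<Sum>i=1..N. q i)"
    proof (rule sum_mono)
      fix i assume i: "i \<in> {1..N}"
      then have i1: "i \<ge> 1" by simp
      have "expectation (\<lambda>\<omega>. V i \<omega> * V i \<omega>) = variance (T i)"
        unfolding V_def using ET[OF i1] by (simp add: power2_eq_square)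
      also have "\<dots> = q i - (m i)\<^sup>2"
        using variance_eq[OF Tint[OF i1] Tint2[OF i1]] ET[OF i1] ET2[OF i1] by simp
      also have "\<dots> \<le> q i" by simp
      finally show "expectation (\<lambda>\<omega>. V i \<omega> * V i \<omega>) \<le> q i" .
    qed
    finally show "expectation (\<lambda>\<omega>. (U N \<omega>)\<^sup>2) \<le> (\<Sum>i=1..N. q i)" .
  qed

  have Um: "\<And>N. U N \<in> borel_measurable M"
    unfolding U_def by (rule borel_measurable_sum) (auto intro!: borel_measurable_diff Tm)
  have Ubd: "\<And>N \<omega>. \<bar>U N \<omega>\<bar> \<le> (\<Sum>i=1..N. real i + \<bar>m i\<bar>)"
  proof -
    fix N \<omega>
    have "\<bar>U N \<omega>\<bar> \<le> (\<Sum>i=1..N. \<bar>T i \<omega> - m i\<bar>)" unfolding U_def by (rule sum_abs)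
    also have "\<dots> \<le> (\<Sum>i=1..N. real i + \<bar>m i\<bar>)"
    proof (rule sum_mono)
      fix i show "\<bar>T i \<omega> - m i\<bar> \<le> real i + \<bar>m i\<bar>" using Tb[of i \<omega>] by linarith
    qed
    finally show "\<bar>U N \<omega>\<bar> \<le> (\<Sum>i=1..N. real i + \<bar>m i\<bar>)" .
  qed
  have Uint2: "\<And>N. integrable M (\<lambda>\<omega>. (U N \<omega>)\<^sup>2)"
  proof -
    fix N
    show "integrable M (\<lambda>\<omega>. (U N \<omega>)\<^sup>2)"
    proof (rule bounded_integrable[where B="(\<Sum>i=1..N. real i + \<bar>m i\<bar>)\<^sup>2"])
      show "(\<lambda>\<omega>. (U N \<omega>)\<^sup>2) \<in> borel_measurable M" using Um[of N] by measurable
      fix \<omega>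
      have "\<bar>U N \<omega>\<bar> \<le> \<bar>\<Sum>i=1..N. real i + \<bar>m i\<bar>\<bar>" using Ubd[of N \<omega>] by linarith
      then have "(U N \<omega>)\<^sup>2 \<le> (\<Sum>i=1..N. real i + \<bar>m i\<bar>)\<^sup>2"
        by (simp only: abs_le_square_iff)
      then show "\<bar>(U N \<omega>)\<^sup>2\<bar> \<le> (\<Sum>i=1..N. real i + \<bar>m i\<bar>)\<^sup>2" by simp
    qed
  qed
  have EU: "\<And>N. expectation (U N) = 0"
  proof -
    fix N
    have "expectation (U N) = (\<Sum>i=1..N. expectation (\<lambda>\<omega>. T i \<omega> - m i))"
      unfolding U_def by (rule Bochner_Integration.integral_sum) (use Tint in auto)
    also have "\<dots> = 0"
      by (rule sum.neutral) (use Tint ET in \<open>auto simp: prob_space\<close>)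
    finally show "expectation (U N) = 0" .
  qed
  have cheb: "\<And>N c. c > 0 \<Longrightarrow> prob {\<omega>\<in>space M. c \<le> \<bar>U N \<omega>\<bar>} \<le> (\<Sum>i=1..N. q i) / c\<^sup>2"
  proof -
    fix N :: nat and c :: real assume c: "c > 0"
    have "prob {\<omega>\<in>space M. \<bar>U N \<omega> - expectation (U N)\<bar> \<ge> c} \<le> variance (U N) / c\<^sup>2"
      by (rule Chebyshev_inequality) (use Um Uint2 c in auto)
    also have "variance (U N) = expectation (\<lambda>\<omega>. (U N \<omega>)\<^sup>2)" using EU[of N] by simp
    also have "\<dots> / c\<^sup>2 \<le> (\<Sum>i=1..N. q i) / c\<^sup>2"
      using varbound[of N] by (intro divide_right_mono) auto
    finally show "prob {\<omega>\<in>space M. c \<le> \<bar>U N \<omega>\<bar>} \<le> (\<Sum>i=1..N. q i) / c\<^sup>2"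
      using EU[of N] by simp
  qed

  have qsum: "\<And>K. (\<Sum>i=1..K. q i / (real i)\<^sup>2) \<le> 2 * \<mu>"
  proof -
    fix K :: nat
    have tint: "\<And>i. integrable M (\<lambda>\<omega>. (trunc i (Z \<omega>))\<^sup>2 / (real i)\<^sup>2)"
    proof -
      fix i :: nat
      show "integrable M (\<lambda>\<omega>. (trunc i (Z \<omega>))\<^sup>2 / (real i)\<^sup>2)"
      proof (rule bounded_integrable[where B="(real i)\<^sup>2 / (real i)\<^sup>2"])
        show "(\<lambda>\<omega>. (trunc i (Z \<omega>))\<^sup>2 / (real i)\<^sup>2) \<in> borel_measurable M" by measurable
        fix \<omega>
        have "(trunc i (Z \<omega>))\<^sup>2 \<le> (real i)\<^sup>2"
          using trunc_bd[OF nnZ, of i \<omega>] abs_le_square_iff[of "trunc i (Z \<omega>)" "real i"] by simp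
        then show "\<bar>(trunc i (Z \<omega>))\<^sup>2 / (real i)\<^sup>2\<bar> \<le> (real i)\<^sup>2 / (real i)\<^sup>2"
          by (simp add: divide_right_mono)
      qed
    qed
    have "(\<Sum>i=1..K. q i / (real i)\<^sup>2) = (\<Sum>i=1..K. expectation (\<lambda>\<omega>. (trunc i (Z \<omega>))\<^sup>2 / (real i)\<^sup>2))"
      unfolding q_def by simp
    also have "\<dots> = expectation (\<lambda>\<omega>. \<Sum>i=1..K. (trunc i (Z \<omega>))\<^sup>2 / (real i)\<^sup>2)"
      by (rule Bochner_Integration.integral_sum[symmetric]) (use tint in auto)
    also have "\<dots> \<le> expectation (\<lambda>\<omega>. 2 * Z \<omega>)"
    proof (rule Bochner_Integration.integral_mono)
      show "integrable M (\<lambda>\<omega>. \<Sum>i=1..K. (trunc i (Z \<omega>))\<^sup>2 / (real i)\<^sup>2)" using tint by auto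
      show "integrable M (\<lambda>\<omega>. 2 * Z \<omega>)" using intZ by auto
      fix \<omega>
      have "(\<Sum>i=1..K. (trunc i (Z \<omega>))\<^sup>2 / (real i)\<^sup>2)
          = (\<Sum>i=1..K. if Z \<omega> \<le> real i then (Z \<omega>)\<^sup>2 / (real i)\<^sup>2 else 0)"
        unfolding trunc_def by (intro sum.cong) auto
      also have "\<dots> \<le> 2 * Z \<omega>" by (rule sq_trunc_sum[OF nnZ])
      finally show "(\<Sum>i=1..K. (trunc i (Z \<omega>))\<^sup>2 / (real i)\<^sup>2) \<le> 2 * Z \<omega>" .
    qed
    also have "\<dots> = 2 * \<mu>" unfolding \<mu>_def by simp
    finally show "(\<Sum>i=1..K. q i / (real i)\<^sup>2) \<le> 2 * \<mu>" .
  qed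
  have stepD: "\<And>a. a > 1 \<Longrightarrow> AE \<omega> in M. (\<lambda>n. U (geo_seq a n) \<omega> / real (geo_seq a n)) \<longlonglongrightarrow> 0"
  proof -
    fix a :: real assume a: "a > 1"
    define kk where "kk = geo_seq a"
    define C where "C = a\<^sup>2 / (a\<^sup>2 - 1)"
    have C0: "C \<ge> 0"
    proof -
      have "1 < a * a" using a by (metis less_1_mult order.strict_trans zero_less_one)
      then show ?thesis unfolding C_def by (simp add: power2_eq_square)
    qed
    have kkge: "\<And>n. real (kk n) \<ge> 1" unfolding kk_def using geo_seq_ge
      by (metis add_leE of_nat_1 of_nat_le_iff)
    have kkmono: "\<And>n n'. n \<le> n' \<Longrightarrow> kk n \<le> kk n'"
      unfolding kk_def using geo_seq_strict_mono by (metis strict_mono_leD)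
    have summ: "summable (\<lambda>n. (\<Sum>i=1..kk n. q i) / (real (kk n))\<^sup>2)"
    proof (rule summableI_nonneg_bounded[where x="C * (2 * \<mu>)"])
      show "\<And>n. 0 \<le> (\<Sum>i=1..kk n. q i) / (real (kk n))\<^sup>2" using q0 by (auto intro!: divide_nonneg_nonneg sum_nonneg)
      fix N :: nat
      define K where "K = kk N"
      have "(\<Sum>n<N. (\<Sum>i=1..kk n. q i) / (real (kk n))\<^sup>2)
          = (\<Sum>n<N. \<Sum>i=1..K. if i \<le> kk n then q i / (real (kk n))\<^sup>2 else 0)"
      proof (rule sum.cong[OF refl])
        fix n assume "n \<in> {..<N}"
        then have kn: "kk n \<le> K" unfolding K_def using kkmono by auto
        have "(\<Sum>i=1..K. if i \<le> kk n then q i / (real (kk n))\<^sup>2 else 0)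
            = (\<Sum>i\<in>{i\<in>{1..K}. i \<le> kk n}. q i / (real (kk n))\<^sup>2)"
          by (rule sum.inter_filter[symmetric]) auto
        also have "{i\<in>{1..K}. i \<le> kk n} = {1..kk n}" using kn by auto
        finally show "(\<Sum>i=1..kk n. q i) / (real (kk n))\<^sup>2
            = (\<Sum>i=1..K. if i \<le> kk n then q i / (real (kk n))\<^sup>2 else 0)"
          by (simp add: sum_divide_distrib)
      qed
      also have "\<dots> = (\<Sum>i=1..K. \<Sum>n<N. if i \<le> kk n then q i / (real (kk n))\<^sup>2 else 0)"
        by (rule sum.swap)
      also have "\<dots> = (\<Sum>i=1..K. q i * (\<Sum>n\<in>{n. n < N \<and> geo_seq a n \<ge> i}. 1 / (real (geo_seq a n))\<^sup>2))"
      proof (rule sum.cong[OF refl])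
        fix i
        have "(\<Sum>n<N. if i \<le> kk n then q i / (real (kk n))\<^sup>2 else 0)
            = (\<Sum>n\<in>{n\<in>{..<N}. i \<le> kk n}. q i / (real (kk n))\<^sup>2)"
          by (rule sum.inter_filter[symmetric]) auto
        also have "{n\<in>{..<N}. i \<le> kk n} = {n. n < N \<and> geo_seq a n \<ge> i}"
          unfolding kk_def by auto
        finally show "(\<Sum>n<N. if i \<le> kk n then q i / (real (kk n))\<^sup>2 else 0)
            = q i * (\<Sum>n\<in>{n. n < N \<and> geo_seq a n \<ge> i}. 1 / (real (geo_seq a n))\<^sup>2)"
          unfolding kk_def by (simp add: sum_distrib_left)
      qed
      also have "\<dots> \<le> (\<Sum>i=1..K. q i * (C / (real i)\<^sup>2))"
      proof (rule sum_mono)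
        fix i assume "i \<in> {1..K}"
        then have "i \<ge> 1" by simp
        then show "q i * (\<Sum>n\<in>{n. n < N \<and> geo_seq a n \<ge> i}. 1 / (real (geo_seq a n))\<^sup>2) \<le> q i * (C / (real i)\<^sup>2)"
          using geo_sum_bound[OF a, of i N] q0[of i] unfolding C_def by (intro mult_left_mono) auto
      qed
      also have "\<dots> = C * (\<Sum>i=1..K. q i / (real i)\<^sup>2)"
        by (simp add: sum_distrib_left mult.commute)
      also have "\<dots> \<le> C * (2 * \<mu>)" using qsum C0 by (intro mult_left_mono) auto
      finally show "(\<Sum>n<N. (\<Sum>i=1..kk n. q i) / (real (kk n))\<^sup>2) \<le> C * (2 * \<mu>)" .
    qed
    have "\<forall>l::nat. AE \<omega> in M. eventually (\<lambda>n. \<bar>U (kk n) \<omega>\<bar> < real (kk n) / (real l + 1)) sequentially"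
    proof
      fix l :: nat
      define A where "A n = {\<omega>\<in>space M. real (kk n) / (real l + 1) \<le> \<bar>U (kk n) \<omega>\<bar>}" for n
      have Asets: "\<And>n. A n \<in> sets M" unfolding A_def using Um by measurable
      have "summable (\<lambda>n. measure M (A n))"
      proof (rule summable_comparison_test')
        show "summable (\<lambda>n. (real l + 1)\<^sup>2 * ((\<Sum>i=1..kk n. q i) / (real (kk n))\<^sup>2))"
          using summ by (rule summable_mult)
        fix n :: nat
        have cpos: "real (kk n) / (real l + 1) > 0" using kkge[of n] by simp
        have "measure M (A n) \<le> (\<Sum>i=1..kk n. q i) / (real (kk n) / (real l + 1))\<^sup>2"
          unfolding A_def by (rule cheb[OF cpos])
        also have "\<dots> = (real l + 1)\<^sup>2 * ((\<Sum>i=1..kk n. q i) / (real (kk n))\<^sup>2)"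
          by (simp add: power_divide)
        finally show "norm (measure M (A n)) \<le> (real l + 1)\<^sup>2 * ((\<Sum>i=1..kk n. q i) / (real (kk n))\<^sup>2)"
          by simp
      qed
      then have "AE \<omega> in M. eventually (\<lambda>n. \<omega> \<in> space M - A n) sequentially"
        by (intro borel_cantelli_AE1) (auto simp: Asets less_top[symmetric])
      then show "AE \<omega> in M. eventually (\<lambda>n. \<bar>U (kk n) \<omega>\<bar> < real (kk n) / (real l + 1)) sequentially"
        by eventually_elim (auto simp: A_def elim!: eventually_mono)
    qed
    then have "AE \<omega> in M. \<forall>l::nat. eventually (\<lambda>n. \<bar>U (kk n) \<omega>\<bar> < real (kk n) / (real l + 1)) sequentially"
      by (simp add: AE_all_countable)
    then show "AE \<omega> in M. (\<lambda>n. U (geo_seq a n) \<omega> / real (geo_seq a n)) \<longlonglongrightarrow> 0"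
    proof eventually_elim
      fix \<omega> assume H: "\<forall>l::nat. eventually (\<lambda>n. \<bar>U (kk n) \<omega>\<bar> < real (kk n) / (real l + 1)) sequentially"
      show "(\<lambda>n. U (geo_seq a n) \<omega> / real (geo_seq a n)) \<longlonglongrightarrow> 0"
      proof (rule LIMSEQ_I)
        fix r :: real assume r: "r > 0"
        obtain l :: nat where l: "l > 0" "inverse (real l) < r" using ex_inverse_of_nat_less[OF r] by auto
        have "1 / (real l + 1) < r"
        proof -
          have "1 / (real l + 1) \<le> inverse (real l)" using l by (simp add: divide_simps inverse_eq_divide)
          then show ?thesis using l by linarith
        qed
        from H[rule_format, of l] obtain N where N: "\<And>n. n \<ge> N \<Longrightarrow> \<bar>U (kk n) \<omega>\<bar> < real (kk n) / (real l + 1)"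
          unfolding eventually_sequentially by blast
        show "\<exists>no. \<forall>n\<ge>no. norm (U (geo_seq a n) \<omega> / real (geo_seq a n) - 0) < r"
        proof (intro exI[of _ N] allI impI)
          fix n assume "n \<ge> N"
          then have "\<bar>U (kk n) \<omega>\<bar> < real (kk n) / (real l + 1)" by (rule N)
          then have "\<bar>U (kk n) \<omega>\<bar> / real (kk n) < 1 / (real l + 1)"
            using kkge[of n] by (simp add: divide_simps)
          then show "norm (U (geo_seq a n) \<omega> / real (geo_seq a n) - 0) < r"
            using \<open>1 / (real l + 1) < r\<close> kkge[of n] unfolding kk_def by (simp add: abs_divide)
        qed
      qed
    qed
  qed

  have stepE: "AE \<omega> in M. \<exists>I. \<forall>i\<ge>I. Zs i \<omega> \<le> real i"
  proof -
    define B where "B i = {\<omega>\<in>space M. real (Suc i) < Zs (Suc i) \<omega>}" for i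
    have Bsets: "\<And>i. B i \<in> sets M"
    proof -
      fix i
      have [measurable]: "Zs (Suc i) \<in> borel_measurable M" using Zsm by simp
      show "B i \<in> sets M" unfolding B_def by measurable
    qed
    have pB: "\<And>i. measure M (B i) = expectation (\<lambda>\<omega>. if real (Suc i) < Z \<omega> then 1 else 0)"
    proof -
      fix i
      have "measure M (B i) = prob {\<omega>\<in>space M. Zs (Suc i) \<omega> \<in> {real (Suc i)<..}}"
        unfolding B_def by simp
      also have "\<dots> = prob {\<omega>\<in>space M. Z \<omega> \<in> {real (Suc i)<..}}"
        by (rule transfer_prob) (use dist Zsm in auto)
      also have "\<dots> = expectation (indicator {\<omega>\<in>space M. real (Suc i) < Z \<omega>})"
        by simp
      also have "\<dots> = expectation (\<lambda>\<omega>. if real (Suc i) < Z \<omega> then 1 else 0)"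
        by (rule Bochner_Integration.integral_cong) (auto simp: indicator_def)
      finally show "measure M (B i) = expectation (\<lambda>\<omega>. if real (Suc i) < Z \<omega> then 1 else 0)" .
    qed
    have iint: "\<And>r. integrable M (\<lambda>\<omega>. if r < Z \<omega> then 1 else (0::real))"
    proof -
      fix r :: real
      show "integrable M (\<lambda>\<omega>. if r < Z \<omega> then 1 else (0::real))"
        by (rule bounded_integrable[where B=1]) auto
    qed
    have "summable (\<lambda>i. measure M (B i))"
    proof (rule summableI_nonneg_bounded[where x="\<mu>"])
      show "\<And>i. 0 \<le> measure M (B i)" by simp
      fix K :: nat
      have "(\<Sum>i<K. measure M (B i)) = (\<Sum>i<K. expectation (\<lambda>\<omega>. if real (Suc i) < Z \<omega> then 1 else 0))"
        using pB by simp
      also have "\<dots> = expectation (\<lambda>\<omega>. \<Sum>i<K. if real (Suc i) < Z \<omega> then 1 else 0)"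
        by (rule Bochner_Integration.integral_sum[symmetric]) (use iint in auto)
      also have "\<dots> \<le> expectation Z"
      proof (rule Bochner_Integration.integral_mono)
        show "integrable M (\<lambda>\<omega>. \<Sum>i<K. if real (Suc i) < Z \<omega> then 1 else (0::real))"
          using iint by auto
        show "integrable M Z" by (rule intZ)
        fix \<omega>
        have "(\<Sum>i<K. if real (Suc i) < Z \<omega> then 1 else (0::real)) = (\<Sum>i=1..K. if real i < Z \<omega> then 1 else 0)"
          by (simp add: sum.atLeast1_atMost_eq)
        also have "\<dots> \<le> Z \<omega>" by (rule count_sum[OF nnZ])
        finally show "(\<Sum>i<K. if real (Suc i) < Z \<omega> then 1 else (0::real)) \<le> Z \<omega>" .
      qed
      finally show "(\<Sum>i<K. measure M (B i)) \<le> \<mu>" unfolding \<mu>_def .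
    qed
    then have "AE \<omega> in M. eventually (\<lambda>i. \<omega> \<in> space M - B i) sequentially"
      by (intro borel_cantelli_AE1) (auto simp: Bsets less_top[symmetric])
    then show ?thesis
    proof eventually_elim
      fix \<omega> assume "eventually (\<lambda>i. \<omega> \<in> space M - B i) sequentially"
      then obtain I where I: "\<And>i. i \<ge> I \<Longrightarrow> \<omega> \<in> space M - B i"
        unfolding eventually_sequentially by blast
      show "\<exists>I. \<forall>i\<ge>I. Zs i \<omega> \<le> real i"
      proof (intro exI[of _ "Suc I"] allI impI)
        fix i assume i: "i \<ge> Suc I"
        then obtain i' where i': "i = Suc i'" "i' \<ge> I" by (cases i) auto
        then show "Zs i \<omega> \<le> real i" using I[OF i'(2)] unfolding B_def by auto
      qed
    qed
  qed

  have "AE \<omega> in M. (\<forall>j. (\<lambda>n. U (geo_seq (alpha_j j) n) \<omega> / real (geo_seq (alpha_j j) n)) \<longlonglongrightarrow> 0)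
                   \<and> (\<exists>I. \<forall>i\<ge>I. Zs i \<omega> \<le> real i)"
  proof -
    have "\<And>j. alpha_j j > 1" unfolding alpha_j_def by simp
    then have "AE \<omega> in M. \<forall>j. (\<lambda>n. U (geo_seq (alpha_j j) n) \<omega> / real (geo_seq (alpha_j j) n)) \<longlonglongrightarrow> 0"
      using stepD by (simp add: AE_all_countable)
    then show ?thesis using stepE by eventually_elim auto
  qed
  then show ?thesis
  proof eventually_elim
    fix \<omega>
    assume H: "(\<forall>j. (\<lambda>n. U (geo_seq (alpha_j j) n) \<omega> / real (geo_seq (alpha_j j) n)) \<longlonglongrightarrow> 0)
                   \<and> (\<exists>I. \<forall>i\<ge>I. Zs i \<omega> \<le> real i)"
    then obtain I where I: "\<And>i. i \<ge> I \<Longrightarrow> Zs i \<omega> \<le> real i" by blast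
    define S where "S N = (\<Sum>k=1..N. Zs k \<omega>)" for N
    define D where "D N = (\<Sum>i=1..N. Zs i \<omega> - T i \<omega>)" for N
    have decomp: "\<And>N. S N = (\<Sum>i=1..N. m i) + U N \<omega> + D N"
    proof -
      fix N
      have "S N = (\<Sum>i=1..N. m i + (T i \<omega> - m i) + (Zs i \<omega> - T i \<omega>))" unfolding S_def by simp
      also have "\<dots> = (\<Sum>i=1..N. m i) + U N \<omega> + D N" unfolding U_def D_def by (simp only: sum.distrib)
      finally show "S N = (\<Sum>i=1..N. m i) + U N \<omega> + D N" .
    qed
    have Dconst: "\<And>N. N \<ge> I \<Longrightarrow> D N = D I"
    proof -
      fix N assume "N \<ge> I"
      then show "D N = D I"
      proof (induction N rule: dec_induct)
        case base then show ?case by simp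
      next
        case (step N)
        have "Zs (Suc N) \<omega> \<le> real (Suc N)" using I[of "Suc N"] step by simp
        then have "T (Suc N) \<omega> = Zs (Suc N) \<omega>" unfolding T_def trunc_def by simp
        then show ?case using step unfolding D_def by simp
      qed
    qed
    show "(\<lambda>n. (\<Sum>k=1..n. Zs k \<omega>) / real n) \<longlonglongrightarrow> expectation Z"
    proof -
      have "(\<lambda>m. S m / real m) \<longlonglongrightarrow> \<mu>"
      proof (rule interp)
        show "\<And>m n. m \<le> n \<Longrightarrow> S m \<le> S n"
          unfolding S_def using nnZs by (intro sum_mono2) auto
        show "\<And>n. 0 \<le> S n" unfolding S_def using nnZs by (auto intro: sum_nonneg)
        fix j
        define kk where "kk = geo_seq (alpha_j j)"
        have sm: "strict_mono kk" unfolding kk_def by (rule geo_seq_strict_mono)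
        have l1: "(\<lambda>n. (\<Sum>i=1..kk n. m i) / real (kk n)) \<longlonglongrightarrow> \<mu>"
          using LIMSEQ_subseq_LIMSEQ[OF cesaro_m sm] by (simp add: comp_def)
        have l2: "(\<lambda>n. U (kk n) \<omega> / real (kk n)) \<longlonglongrightarrow> 0"
          using H unfolding kk_def by simp
        have l3: "(\<lambda>n. D (kk n) / real (kk n)) \<longlonglongrightarrow> 0"
        proof -
          have "(\<lambda>n. D I / real (kk n)) \<longlonglongrightarrow> 0"
            using LIMSEQ_subseq_LIMSEQ[OF lim_const_over_n[of "D I"] sm] by (simp add: comp_def)
          moreover have "eventually (\<lambda>n. D I / real (kk n) = D (kk n) / real (kk n)) sequentially"
          proof -
            have "eventually (\<lambda>n. kk n \<ge> I) sequentially"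
              using filterlim_subseq[OF sm] unfolding filterlim_at_top by blast
            then show ?thesis
            proof eventually_elim
              fix n assume "kk n \<ge> I"
              then have "D (kk n) = D I" by (rule Dconst)
              then show "D I / real (kk n) = D (kk n) / real (kk n)" by simp
            qed
          qed
          ultimately show ?thesis by (rule Lim_transform_eventually)
        qed
        have "(\<lambda>n. (\<Sum>i=1..kk n. m i) / real (kk n) + U (kk n) \<omega> / real (kk n) + D (kk n) / real (kk n))
                \<longlonglongrightarrow> \<mu> + 0 + 0"
          by (intro tendsto_add l1 l2 l3)
        moreover have "(\<lambda>n. S (kk n) / real (kk n)) = (\<lambda>n. (\<Sum>i=1..kk n. m i) / real (kk n) + U (kk n) \<omega> / real (kk n) + D (kk n) / real (kk n))"
          by (simp only: decomp add_divide_distrib)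
        ultimately have "(\<lambda>n. S (kk n) / real (kk n)) \<longlonglongrightarrow> \<mu>" by simp
        then show "(\<lambda>n. S (geo_seq (alpha_j j) n) / real (geo_seq (alpha_j j) n)) \<longlonglongrightarrow> \<mu>"
          unfolding kk_def .
      qed
      then show ?thesis unfolding S_def \<mu>_def .
    qed
  qed
qed

end


context prob_space begin

lemma distr_compose_eq:
  fixes U V :: "'a \<Rightarrow> 'b::topological_space" and g :: "'b \<Rightarrow> 'c::topological_space"
  assumes "distr M borel U = distr M borel V"
    and [measurable]: "U \<in> borel_measurable M" "V \<in> borel_measurable M" "g \<in> borel_measurable borel"
  shows "distr M borel (\<lambda>\<omega>. g (U \<omega>)) = distr M borel (\<lambda>\<omega>. g (V \<omega>))"
proof -
  have "distr M borel (\<lambda>\<omega>. g (U \<omega>)) = distr (distr M borel U) borel g"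
    by (subst distr_distr) (auto simp: comp_def)
  also have "\<dots> = distr (distr M borel V) borel g" using assms(1) by simp
  also have "\<dots> = distr M borel (\<lambda>\<omega>. g (V \<omega>))"
    by (subst distr_distr) (auto simp: comp_def)
  finally show ?thesis .
qed

lemma slln:
  fixes Z :: "'a \<Rightarrow> real" and Zs :: "nat \<Rightarrow> 'a \<Rightarrow> real"
  assumes ind: "indep_vars (\<lambda>_. borel) Zs {1..}"
    and dist: "\<And>i. i \<ge> 1 \<Longrightarrow> distr M borel (Zs i) = distr M borel Z"
    and Zm[measurable]: "Z \<in> borel_measurable M"
    and intZ: "integrable M Z"
  shows "AE \<omega> in M. (\<lambda>n. (\<Sum>k=1..n. Zs k \<omega>) / real n) \<longlonglongrightarrow> expectation Z"
proof -
  have "\<forall>i\<in>{1..}. random_variable borel (Zs i)" using ind unfolding indep_vars_def by (rule conjunct1)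
  then have Zsm: "\<And>i. i \<ge> 1 \<Longrightarrow> Zs i \<in> borel_measurable M" by simp
  define g1 :: "real \<Rightarrow> real" where "g1 z = max z 0" for z
  define g2 :: "real \<Rightarrow> real" where "g2 z = max (- z) 0" for z
  have g1m[measurable]: "g1 \<in> borel_measurable borel" unfolding g1_def by measurable
  have g2m[measurable]: "g2 \<in> borel_measurable borel" unfolding g2_def by measurable
  have A1: "AE \<omega> in M. (\<lambda>n. (\<Sum>k=1..n. g1 (Zs k \<omega>)) / real n) \<longlonglongrightarrow> expectation (\<lambda>\<omega>. g1 (Z \<omega>))"
  proof (rule slln_nonneg)
    show "indep_vars (\<lambda>_. borel) (\<lambda>i \<omega>. g1 (Zs i \<omega>)) {1..}"
      by (rule indep_vars_compose2[OF ind]) (rule g1m)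
    show "\<And>i. 1 \<le> i \<Longrightarrow> distr M borel (\<lambda>\<omega>. g1 (Zs i \<omega>)) = distr M borel (\<lambda>\<omega>. g1 (Z \<omega>))"
      using distr_compose_eq[OF dist Zsm Zm g1m] by blast
    show "integrable M (\<lambda>\<omega>. g1 (Z \<omega>))" unfolding g1_def
      using intZ by (intro integrable_max) auto
    show "(\<lambda>\<omega>. g1 (Z \<omega>)) \<in> borel_measurable M" using measurable_compose[OF Zm g1m] by simp
    show "\<And>\<omega>. 0 \<le> g1 (Z \<omega>)" unfolding g1_def by simp
    show "\<And>i \<omega>. 0 \<le> g1 (Zs i \<omega>)" unfolding g1_def by simp
  qed
  have A2: "AE \<omega> in M. (\<lambda>n. (\<Sum>k=1..n. g2 (Zs k \<omega>)) / real n) \<longlonglongrightarrow> expectation (\<lambda>\<omega>. g2 (Z \<omega>))"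
  proof (rule slln_nonneg)
    show "indep_vars (\<lambda>_. borel) (\<lambda>i \<omega>. g2 (Zs i \<omega>)) {1..}"
      by (rule indep_vars_compose2[OF ind]) (rule g2m)
    show "\<And>i. 1 \<le> i \<Longrightarrow> distr M borel (\<lambda>\<omega>. g2 (Zs i \<omega>)) = distr M borel (\<lambda>\<omega>. g2 (Z \<omega>))"
      using distr_compose_eq[OF dist Zsm Zm g2m] by blast
    show "integrable M (\<lambda>\<omega>. g2 (Z \<omega>))" unfolding g2_def
      using intZ by (intro integrable_max) auto
    show "(\<lambda>\<omega>. g2 (Z \<omega>)) \<in> borel_measurable M" using measurable_compose[OF Zm g2m] by simp
    show "\<And>\<omega>. 0 \<le> g2 (Z \<omega>)" unfolding g2_def by simp
    show "\<And>i \<omega>. 0 \<le> g2 (Zs i \<omega>)" unfolding g2_def by simp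
  qed
  have EZ: "expectation Z = expectation (\<lambda>\<omega>. g1 (Z \<omega>)) - expectation (\<lambda>\<omega>. g2 (Z \<omega>))"
  proof -
    have "expectation Z = expectation (\<lambda>\<omega>. g1 (Z \<omega>) - g2 (Z \<omega>))"
      by (rule Bochner_Integration.integral_cong) (auto simp: g1_def g2_def)
    also have "\<dots> = expectation (\<lambda>\<omega>. g1 (Z \<omega>)) - expectation (\<lambda>\<omega>. g2 (Z \<omega>))"
      by (rule Bochner_Integration.integral_diff) (use intZ in \<open>auto simp: g1_def g2_def\<close>)
    finally show ?thesis .
  qed
  from A1 A2 show ?thesis
  proof eventually_elim
    fix \<omega>
    assume l1: "(\<lambda>n. (\<Sum>k=1..n. g1 (Zs k \<omega>)) / real n) \<longlonglongrightarrow> expectation (\<lambda>\<omega>. g1 (Z \<omega>))"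
      and l2: "(\<lambda>n. (\<Sum>k=1..n. g2 (Zs k \<omega>)) / real n) \<longlonglongrightarrow> expectation (\<lambda>\<omega>. g2 (Z \<omega>))"
    have "(\<lambda>n. (\<Sum>k=1..n. g1 (Zs k \<omega>)) / real n - (\<Sum>k=1..n. g2 (Zs k \<omega>)) / real n)
        \<longlonglongrightarrow> expectation (\<lambda>\<omega>. g1 (Z \<omega>)) - expectation (\<lambda>\<omega>. g2 (Z \<omega>))"
      by (rule tendsto_diff[OF l1 l2])
    moreover have "\<And>n. (\<Sum>k=1..n. g1 (Zs k \<omega>)) / real n - (\<Sum>k=1..n. g2 (Zs k \<omega>)) / real n
        = (\<Sum>k=1..n. Zs k \<omega>) / real n"
    proof -
      fix n
      have "(\<Sum>k=1..n. Zs k \<omega>) = (\<Sum>k=1..n. g1 (Zs k \<omega>) - g2 (Zs k \<omega>))"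
        by (intro sum.cong) (auto simp: g1_def g2_def)
      then show "(\<Sum>k=1..n. g1 (Zs k \<omega>)) / real n - (\<Sum>k=1..n. g2 (Zs k \<omega>)) / real n
        = (\<Sum>k=1..n. Zs k \<omega>) / real n"
        by (simp add: sum_subtractf diff_divide_distrib)
    qed
    ultimately show "(\<lambda>n. (\<Sum>k=1..n. Zs k \<omega>) / real n) \<longlonglongrightarrow> expectation Z"
      unfolding EZ by simp
  qed
qed

lemma slln_pair:
  fixes P :: "'a \<Rightarrow> real \<times> real" and Ps :: "nat \<Rightarrow> 'a \<Rightarrow> real \<times> real"
    and h :: "real \<times> real \<Rightarrow> real"
  assumes ind: "indep_vars (\<lambda>_. borel) Ps {1..}"
    and dist: "\<And>i. i \<ge> 1 \<Longrightarrow> distr M borel (Ps i) = distr M borel P"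
    and Pm[measurable]: "P \<in> borel_measurable M"
    and hm[measurable]: "h \<in> borel_measurable borel"
    and hint: "integrable M (\<lambda>\<omega>. h (P \<omega>))"
  shows "AE \<omega> in M. (\<lambda>n. (\<Sum>k=1..n. h (Ps k \<omega>)) / real n) \<longlonglongrightarrow> expectation (\<lambda>\<omega>. h (P \<omega>))"
proof (rule slln[where Zs="\<lambda>k \<omega>. h (Ps k \<omega>)" and Z="\<lambda>\<omega>. h (P \<omega>)"])
  have "\<forall>i\<in>{1..}. random_variable borel (Ps i)" using ind unfolding indep_vars_def by (rule conjunct1)
  then have Psm: "\<And>i. i \<ge> 1 \<Longrightarrow> Ps i \<in> borel_measurable M" by simp
  show "indep_vars (\<lambda>_. borel) (\<lambda>i \<omega>. h (Ps i \<omega>)) {1..}"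
    by (rule indep_vars_compose2[OF ind]) (rule hm)
  show "\<And>i. 1 \<le> i \<Longrightarrow> distr M borel (\<lambda>\<omega>. h (Ps i \<omega>)) = distr M borel (\<lambda>\<omega>. h (P \<omega>))"
    using distr_compose_eq[OF dist Psm Pm hm] by blast
  show "(\<lambda>\<omega>. h (P \<omega>)) \<in> borel_measurable M" using measurable_compose[OF Pm hm] by (simp add: comp_def)
  show "integrable M (\<lambda>\<omega>. h (P \<omega>))" by (rule hint)
qed

end


lemma (in real_distribution) quantile_point:
  assumes c: "0 < c" "c < 1"
  shows "\<exists>t. c \<le> cdf M t \<and> measure M {..<t} \<le> c"
proof -
  define S where "S = {t. c \<le> cdf M t}"
  have "eventually (\<lambda>t. cdf M t > c) at_top"
    using cdf_lim_at_top_prob c by (auto intro: order_tendstoD)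
  then obtain t1 where t1: "cdf M t1 > c" by (metis eventually_at_top_linorder order_refl)
  have t1S: "t1 \<in> S" unfolding S_def using t1 by simp
  have "eventually (\<lambda>t. cdf M t < c) at_bot"
    using cdf_lim_at_bot c by (auto intro: order_tendstoD)
  then obtain b where b: "\<And>t. t \<le> b \<Longrightarrow> cdf M t < c" unfolding eventually_at_bot_linorder by blast
  have bdd: "bdd_below S"
  proof (rule bdd_belowI[of _ b])
    fix x assume "x \<in> S"
    then have "c \<le> cdf M x" unfolding S_def by simp
    then show "b \<le> x" using b[of x] by (cases "x \<le> b") auto
  qed
  define t0 where "t0 = Inf S"
  have low: "\<And>s. s \<in> S \<Longrightarrow> t0 \<le> s" unfolding t0_def using bdd by (simp add: cInf_lower)
  have Sne: "S \<noteq> {}" using t1S by auto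
  have right: "c \<le> cdf M t0"
  proof (rule tendsto_lowerbound)
    show "(cdf M \<longlongrightarrow> cdf M t0) (at_right t0)"
      using cdf_is_right_cont[of t0] unfolding continuous_within by simp
    show "eventually (\<lambda>s. c \<le> cdf M s) (at_right t0)"
      unfolding eventually_at_right_field
    proof (intro exI[of _ "t0 + 1"] conjI allI impI)
      fix s assume s: "t0 < s" "s < t0 + 1"
      then have "Inf S < s" unfolding t0_def by simp
      then obtain s' where s': "s' \<in> S" "s' < s" using Sne by (metis cInf_lessD)
      have "c \<le> cdf M s'" using s' unfolding S_def by simp
      also have "\<dots> \<le> cdf M s" using s' by (intro cdf_nondecreasing) simp
      finally show "c \<le> cdf M s" .
    qed simp
  qed simp
  have left: "measure M {..<t0} \<le> c"
  proof (rule tendsto_upperbound)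
    show "(cdf M \<longlongrightarrow> measure M {..<t0}) (at_left t0)" by (rule cdf_at_left)
    show "eventually (\<lambda>s. cdf M s \<le> c) (at_left t0)"
      unfolding eventually_at_left_field
    proof (intro exI[of _ "t0 - 1"] conjI allI impI)
      fix s assume s: "t0 - 1 < s" "s < t0"
      then have "s \<notin> S" using low by force
      then show "cdf M s \<le> c" unfolding S_def by simp
    qed simp
  qed simp
  show ?thesis using right left by blast
qed

lemma gc_det:
  fixes F L G Gl :: "real \<Rightarrow> real" and t :: "nat \<Rightarrow> real" and N :: nat and e :: real
  assumes N: "N \<ge> 1" and e: "e \<ge> 0"
    and Fmono: "\<And>x y. x \<le> y \<Longrightarrow> F x \<le> F y" and Gmono: "\<And>x y. x \<le> y \<Longrightarrow> G x \<le> G y"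
    and F01: "\<And>x. 0 \<le> F x \<and> F x \<le> 1" and G01: "\<And>x. 0 \<le> G x \<and> G x \<le> 1"
    and FL: "\<And>y s. y < s \<Longrightarrow> F y \<le> L s" and GGl: "\<And>y s. y < s \<Longrightarrow> G y \<le> Gl s"
    and tF: "\<And>j. j \<in> {1..<N} \<Longrightarrow> real j / real N \<le> F (t j)"
    and tL: "\<And>j. j \<in> {1..<N} \<Longrightarrow> L (t j) \<le> real j / real N"
    and eG: "\<And>j. j \<in> {1..<N} \<Longrightarrow> \<bar>G (t j) - F (t j)\<bar> \<le> e"
    and eGl: "\<And>j. j \<in> {1..<N} \<Longrightarrow> \<bar>Gl (t j) - L (t j)\<bar> \<le> e"
  shows "\<bar>G y - F y\<bar> \<le> 1 / real N + e"
proof -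
  define J where "J = {j\<in>{1..<N}. t j \<le> y}"
  have finJ: "finite J" unfolding J_def by simp
  define j0 where "j0 = (if J = {} then 0 else Max J)"
  have j0N: "j0 < N"
  proof (cases "J = {}")
    case True then show ?thesis unfolding j0_def using N by simp
  next
    case False
    then have "Max J \<in> J" using finJ by simp
    then show ?thesis unfolding j0_def J_def using False by auto
  qed
  have Npos: "real N > 0" using N by simp
  have lower: "real j0 / real N \<le> F y \<and> real j0 / real N - e \<le> G y"
  proof (cases "J = {}")
    case True
    then show ?thesis unfolding j0_def using F01[of y] G01[of y] e by simp
  next
    case False
    then have jJ: "j0 \<in> J" unfolding j0_def using finJ by (simp add: Max_in)
    then have j1: "j0 \<in> {1..<N}" and ty: "t j0 \<le> y" unfolding J_def by auto
    have "real j0 / real N \<le> F (t j0)" by (rule tF[OF j1])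
    also have "\<dots> \<le> F y" by (rule Fmono[OF ty])
    finally have a: "real j0 / real N \<le> F y" .
    have "real j0 / real N - e \<le> F (t j0) - e" using tF[OF j1] by simp
    also have "\<dots> \<le> G (t j0)" using eG[OF j1] by linarith
    also have "\<dots> \<le> G y" by (rule Gmono[OF ty])
    finally show ?thesis using a by simp
  qed
  have upper: "F y \<le> (real j0 + 1) / real N \<and> G y \<le> (real j0 + 1) / real N + e"
  proof (cases "Suc j0 < N")
    case False
    then have "real j0 + 1 \<ge> real N" by simp
    then have "1 \<le> (real j0 + 1) / real N" using Npos by simp
    then show ?thesis using F01[of y] G01[of y] e by linarith
  next
    case True
    have j1: "Suc j0 \<in> {1..<N}" using True by simp
    have "Suc j0 \<notin> J"
    proof
      assume "Suc j0 \<in> J"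
      then have "J \<noteq> {}" by auto
      then have "Suc j0 \<le> Max J" using finJ \<open>Suc j0 \<in> J\<close> by simp
      then show False using \<open>J \<noteq> {}\<close> unfolding j0_def by simp
    qed
    then have yt: "y < t (Suc j0)" unfolding J_def using j1 by auto
    have "F y \<le> L (t (Suc j0))" by (rule FL[OF yt])
    also have "\<dots> \<le> real (Suc j0) / real N" by (rule tL[OF j1])
    finally have a: "F y \<le> (real j0 + 1) / real N" by (simp add: add.commute)
    have "G y \<le> Gl (t (Suc j0))" by (rule GGl[OF yt])
    also have "\<dots> \<le> L (t (Suc j0)) + e" using eGl[OF j1] by linarith
    also have "\<dots> \<le> real (Suc j0) / real N + e" using tL[OF j1] by simp
    finally show ?thesis using a by (simp add: add.commute)
  qed
  have d: "(real j0 + 1) / real N - real j0 / real N = 1 / real N"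
    using Npos by (simp add: field_simps)
  show ?thesis using lower upper d by linarith
qed


locale gini_setup = prob_space M for M :: "'a measure" +
  fixes X Y :: "'a \<Rightarrow> real" and Xs Ys :: "nat \<Rightarrow> 'a \<Rightarrow> real"
  assumes Xm[measurable]: "X \<in> borel_measurable M"
    and Ym[measurable]: "Y \<in> borel_measurable M"
    and indP: "indep_vars (\<lambda>_. borel) (\<lambda>i \<omega>. (Xs i \<omega>, Ys i \<omega>)) {1..}"
    and distP: "\<And>i. i \<ge> 1 \<Longrightarrow> distr M borel (\<lambda>\<omega>. (Xs i \<omega>, Ys i \<omega>)) = distr M borel (\<lambda>\<omega>. (X \<omega>, Y \<omega>))"
begin

lemma snd_borel[measurable]: "(snd :: real \<times> real \<Rightarrow> real) \<in> borel_measurable borel"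
  by (rule borel_measurable_continuous_onI) (intro continuous_intros)

lemma fst_borel[measurable]: "(fst :: real \<times> real \<Rightarrow> real) \<in> borel_measurable borel"
  by (rule borel_measurable_continuous_onI) (intro continuous_intros)

lemma Pm: "(\<lambda>\<omega>. (X \<omega>, Y \<omega>)) \<in> borel_measurable M"
  by (rule borel_measurable_Pair[OF Xm Ym])

lemma slln_h:
  assumes hm: "h \<in> borel_measurable borel" and hint: "integrable M (\<lambda>\<omega>. h (X \<omega>, Y \<omega>))"
  shows "AE \<omega> in M. (\<lambda>n. (\<Sum>k=1..n. h (Xs k \<omega>, Ys k \<omega>)) / real n) \<longlonglongrightarrow> expectation (\<lambda>\<omega>. h (X \<omega>, Y \<omega>))"
  using slln_pair[where Ps="\<lambda>i \<omega>. (Xs i \<omega>, Ys i \<omega>)" and P="\<lambda>\<omega>. (X \<omega>, Y \<omega>)" and h=h,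
      OF indP distP Pm hm hint] by simp

definition Gn :: "nat \<Rightarrow> 'a \<Rightarrow> real \<Rightarrow> real" where
  "Gn n \<omega> t = (\<Sum>k=1..n. if Ys k \<omega> \<le> t then 1 else 0) / real n"

definition Gln :: "nat \<Rightarrow> 'a \<Rightarrow> real \<Rightarrow> real" where
  "Gln n \<omega> t = (\<Sum>k=1..n. if Ys k \<omega> < t then 1 else 0) / real n"

lemma ind_le_int: "integrable M (\<lambda>\<omega>. if Y \<omega> \<le> t then 1 else (0::real))"
  by (rule bounded_integrable[where B=1]) auto

lemma ind_lt_int: "integrable M (\<lambda>\<omega>. if Y \<omega> < t then 1 else (0::real))"
  by (rule bounded_integrable[where B=1]) auto

lemma exp_ind_le: "expectation (\<lambda>\<omega>. if Y \<omega> \<le> t then 1 else (0::real)) = cdf (distr M borel Y) t"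
proof -
  have "expectation (\<lambda>\<omega>. if Y \<omega> \<le> t then 1 else (0::real)) = expectation (indicator {\<omega>\<in>space M. Y \<omega> \<le> t})"
    by (rule Bochner_Integration.integral_cong) (auto simp: indicator_def)
  also have "\<dots> = prob {\<omega>\<in>space M. Y \<omega> \<le> t}" by simp
  also have "\<dots> = measure (distr M borel Y) {..t}"
    by (subst measure_distr) (auto simp: vimage_def Int_def conj_commute)
  finally show ?thesis by (simp add: cdf_def)
qed

lemma exp_ind_lt: "expectation (\<lambda>\<omega>. if Y \<omega> < t then 1 else (0::real)) = measure (distr M borel Y) {..<t}"
proof -
  have "expectation (\<lambda>\<omega>. if Y \<omega> < t then 1 else (0::real)) = expectation (indicator {\<omega>\<in>space M. Y \<omega> < t})"
    by (rule Bochner_Integration.integral_cong) (auto simp: indicator_def)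
  also have "\<dots> = prob {\<omega>\<in>space M. Y \<omega> < t}" by simp
  also have "\<dots> = measure (distr M borel Y) {..<t}"
    by (subst measure_distr) (auto simp: vimage_def Int_def conj_commute)
  finally show ?thesis .
qed

lemma Gn_lim: "AE \<omega> in M. (\<lambda>n. Gn n \<omega> t) \<longlonglongrightarrow> cdf (distr M borel Y) t"
proof -
  have hm: "(\<lambda>p::real\<times>real. if snd p \<le> t then 1 else (0::real)) \<in> borel_measurable borel"
    using snd_borel by measurable
  show ?thesis
    using slln_h[OF hm] ind_le_int[of t] exp_ind_le[of t] unfolding Gn_def by simp
qed

lemma Gln_lim: "AE \<omega> in M. (\<lambda>n. Gln n \<omega> t) \<longlonglongrightarrow> measure (distr M borel Y) {..<t}"
proof -
  have hm: "(\<lambda>p::real\<times>real. if snd p < t then 1 else (0::real)) \<in> borel_measurable borel"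
    using snd_borel by measurable
  show ?thesis
    using slln_h[OF hm] ind_lt_int[of t] exp_ind_lt[of t] unfolding Gln_def by simp
qed

lemma Gn_props:
  assumes n: "n \<ge> 1"
  shows "\<And>x y. x \<le> y \<Longrightarrow> Gn n \<omega> x \<le> Gn n \<omega> y"
    and "\<And>x. 0 \<le> Gn n \<omega> x \<and> Gn n \<omega> x \<le> 1"
    and "\<And>y s. y < s \<Longrightarrow> Gn n \<omega> y \<le> Gln n \<omega> s"
proof -
  have npos: "real n > 0" using n by simp
  show "\<And>x y. x \<le> y \<Longrightarrow> Gn n \<omega> x \<le> Gn n \<omega> y"
  proof -
    fix x y :: real assume xy: "x \<le> y"
    have "(\<Sum>k=1..n. if Ys k \<omega> \<le> x then 1 else (0::real)) \<le> (\<Sum>k=1..n. if Ys k \<omega> \<le> y then 1 else 0)"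
      by (rule sum_mono) (use xy in auto)
    then show "Gn n \<omega> x \<le> Gn n \<omega> y" unfolding Gn_def using npos by (simp add: divide_right_mono)
  qed
  show "\<And>x. 0 \<le> Gn n \<omega> x \<and> Gn n \<omega> x \<le> 1"
  proof -
    fix x
    have "(\<Sum>k=1..n. if Ys k \<omega> \<le> x then 1 else (0::real)) \<le> (\<Sum>k=1..n. 1)"
      by (rule sum_mono) auto
    then have "(\<Sum>k=1..n. if Ys k \<omega> \<le> x then 1 else (0::real)) \<le> real n" by simp
    moreover have "0 \<le> (\<Sum>k=1..n. if Ys k \<omega> \<le> x then 1 else (0::real))" by (rule sum_nonneg) auto
    ultimately show "0 \<le> Gn n \<omega> x \<and> Gn n \<omega> x \<le> 1" unfolding Gn_def using npos by simp
  qed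
  show "\<And>y s. y < s \<Longrightarrow> Gn n \<omega> y \<le> Gln n \<omega> s"
  proof -
    fix y s :: real assume ys: "y < s"
    have "(\<Sum>k=1..n. if Ys k \<omega> \<le> y then 1 else (0::real)) \<le> (\<Sum>k=1..n. if Ys k \<omega> < s then 1 else 0)"
      by (rule sum_mono) (use ys in auto)
    then show "Gn n \<omega> y \<le> Gln n \<omega> s" unfolding Gn_def Gln_def using npos by (simp add: divide_right_mono)
  qed
qed

lemma gc:
  "AE \<omega> in M. \<forall>\<epsilon>>0. eventually (\<lambda>n. \<forall>y. \<bar>emp_cdf n (\<lambda>k. Ys k \<omega>) y - cdf (distr M borel Y) y\<bar> \<le> \<epsilon>) sequentially"
proof -
  interpret D: real_distribution "distr M borel Y" using Ym by simp
  define F where "F = cdf (distr M borel Y)"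
  define L where "L t = measure (distr M borel Y) {..<t}" for t
  define tq where "tq N j = (SOME t. real j / real N \<le> F t \<and> L t \<le> real j / real N)" for N j :: nat
  have tq: "\<And>N j. 1 \<le> j \<Longrightarrow> j < N \<Longrightarrow> real j / real N \<le> F (tq N j) \<and> L (tq N j) \<le> real j / real N"
  proof -
    fix N j :: nat assume j: "1 \<le> j" "j < N"
    have "0 < real j / real N" "real j / real N < 1" using j by auto
    then have "\<exists>t. real j / real N \<le> F t \<and> L t \<le> real j / real N"
      unfolding F_def L_def by (rule D.quantile_point)
    then show "real j / real N \<le> F (tq N j) \<and> L (tq N j) \<le> real j / real N"
      unfolding tq_def by (rule someI_ex)
  qed
  have "\<forall>p::nat\<times>nat. AE \<omega> in M. (\<lambda>n. Gn n \<omega> (tq (fst p) (snd p))) \<longlonglongrightarrow> F (tq (fst p) (snd p))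
        \<and> (\<lambda>n. Gln n \<omega> (tq (fst p) (snd p))) \<longlonglongrightarrow> L (tq (fst p) (snd p))"
    unfolding F_def L_def using Gn_lim Gln_lim by simp
  then have "AE \<omega> in M. \<forall>p::nat\<times>nat. (\<lambda>n. Gn n \<omega> (tq (fst p) (snd p))) \<longlonglongrightarrow> F (tq (fst p) (snd p))
        \<and> (\<lambda>n. Gln n \<omega> (tq (fst p) (snd p))) \<longlonglongrightarrow> L (tq (fst p) (snd p))"
    unfolding AE_all_countable .
  then show ?thesis
  proof eventually_elim
    fix \<omega>
    assume H: "\<forall>p::nat\<times>nat. (\<lambda>n. Gn n \<omega> (tq (fst p) (snd p))) \<longlonglongrightarrow> F (tq (fst p) (snd p))
        \<and> (\<lambda>n. Gln n \<omega> (tq (fst p) (snd p))) \<longlonglongrightarrow> L (tq (fst p) (snd p))"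
    show "\<forall>\<epsilon>>0. eventually (\<lambda>n. \<forall>y. \<bar>emp_cdf n (\<lambda>k. Ys k \<omega>) y - cdf (distr M borel Y) y\<bar> \<le> \<epsilon>) sequentially"
    proof (intro allI impI)
      fix \<epsilon> :: real assume eps: "\<epsilon> > 0"
      define e where "e = \<epsilon> / 3"
      have e0: "e > 0" unfolding e_def using eps by simp
      obtain N :: nat where N: "N > 0" "inverse (real N) < e" using ex_inverse_of_nat_less[OF e0] by auto
      have ev1: "eventually (\<lambda>n. \<forall>j\<in>{1..<N}. \<bar>Gn n \<omega> (tq N j) - F (tq N j)\<bar> \<le> e
                                 \<and> \<bar>Gln n \<omega> (tq N j) - L (tq N j)\<bar> \<le> e) sequentially"
      proof (rule eventually_ball_finite)
        show "finite {1..<N}" by simp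
        show "\<forall>j\<in>{1..<N}. eventually (\<lambda>n. \<bar>Gn n \<omega> (tq N j) - F (tq N j)\<bar> \<le> e
                                 \<and> \<bar>Gln n \<omega> (tq N j) - L (tq N j)\<bar> \<le> e) sequentially"
        proof
          fix j assume "j \<in> {1..<N}"
          have c1: "(\<lambda>n. Gn n \<omega> (tq N j)) \<longlonglongrightarrow> F (tq N j)" using H[rule_format, of "(N, j)"] by simp
          have c2: "(\<lambda>n. Gln n \<omega> (tq N j)) \<longlonglongrightarrow> L (tq N j)" using H[rule_format, of "(N, j)"] by simp
          have "eventually (\<lambda>n. dist (Gn n \<omega> (tq N j)) (F (tq N j)) < e) sequentially"
            using c1 e0 by (rule tendstoD)
          moreover have "eventually (\<lambda>n. dist (Gln n \<omega> (tq N j)) (L (tq N j)) < e) sequentially"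
            using c2 e0 by (rule tendstoD)
          ultimately show "eventually (\<lambda>n. \<bar>Gn n \<omega> (tq N j) - F (tq N j)\<bar> \<le> e
                                 \<and> \<bar>Gln n \<omega> (tq N j) - L (tq N j)\<bar> \<le> e) sequentially"
            by eventually_elim (simp add: dist_real_def)
        qed
      qed
      obtain N2 :: nat where N2: "N2 > 0" "inverse (real N2) < e" using ex_inverse_of_nat_less[OF e0] by auto
      have ev2: "eventually (\<lambda>n. n \<ge> 1 \<and> 1 / (real n + 1) \<le> e) sequentially"
        unfolding eventually_sequentially
      proof (intro exI[of _ N2] allI impI conjI)
        fix n assume n: "n \<ge> N2"
        then show "n \<ge> 1" using N2 by simp
        have "1 / (real n + 1) \<le> inverse (real N2)"
          using n N2 by (simp add: inverse_eq_divide divide_simps)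
        then show "1 / (real n + 1) \<le> e" using N2 by simp
      qed
      show "eventually (\<lambda>n. \<forall>y. \<bar>emp_cdf n (\<lambda>k. Ys k \<omega>) y - cdf (distr M borel Y) y\<bar> \<le> \<epsilon>) sequentially"
        using ev1 ev2
      proof eventually_elim
        fix n
        assume E1: "\<forall>j\<in>{1..<N}. \<bar>Gn n \<omega> (tq N j) - F (tq N j)\<bar> \<le> e \<and> \<bar>Gln n \<omega> (tq N j) - L (tq N j)\<bar> \<le> e"
          and E2: "n \<ge> 1 \<and> 1 / (real n + 1) \<le> e"
        have n1: "n \<ge> 1" using E2 by simp
        show "\<forall>y. \<bar>emp_cdf n (\<lambda>k. Ys k \<omega>) y - cdf (distr M borel Y) y\<bar> \<le> \<epsilon>"
        proof
          fix y
          have g: "\<bar>Gn n \<omega> y - F y\<bar> \<le> 1 / real N + e"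
          proof (rule gc_det[where G="Gn n \<omega>" and Gl="Gln n \<omega>" and L=L and t="tq N"])
            show "1 \<le> N" using N by simp
            show "0 \<le> e" using e0 by simp
            show "\<And>x y. x \<le> y \<Longrightarrow> F x \<le> F y" unfolding F_def by (rule D.cdf_nondecreasing)
            show "\<And>x y. x \<le> y \<Longrightarrow> Gn n \<omega> x \<le> Gn n \<omega> y" by (rule Gn_props(1)[OF n1])
            show "\<And>x. 0 \<le> F x \<and> F x \<le> 1" unfolding F_def using D.cdf_nonneg D.cdf_bounded_prob by blast
            show "\<And>x. 0 \<le> Gn n \<omega> x \<and> Gn n \<omega> x \<le> 1" by (rule Gn_props(2)[OF n1])
            show "\<And>y s. y < s \<Longrightarrow> F y \<le> L s"
            proof -
              fix y s :: real assume "y < s"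
              then have "{..y} \<subseteq> {..<s}" by auto
              then show "F y \<le> L s" unfolding F_def L_def cdf_def
                by (intro D.finite_measure_mono) auto
            qed
            show "\<And>y s. y < s \<Longrightarrow> Gn n \<omega> y \<le> Gln n \<omega> s" by (rule Gn_props(3)[OF n1])
            show "\<And>j. j \<in> {1..<N} \<Longrightarrow> real j / real N \<le> F (tq N j)" using tq by auto
            show "\<And>j. j \<in> {1..<N} \<Longrightarrow> L (tq N j) \<le> real j / real N" using tq by auto
            show "\<And>j. j \<in> {1..<N} \<Longrightarrow> \<bar>Gn n \<omega> (tq N j) - F (tq N j)\<bar> \<le> e" using E1 by auto
            show "\<And>j. j \<in> {1..<N} \<Longrightarrow> \<bar>Gln n \<omega> (tq N j) - L (tq N j)\<bar> \<le> e" using E1 by auto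
          qed
          have npos: "real n > 0" using n1 by simp
          have emp: "emp_cdf n (\<lambda>k. Ys k \<omega>) y = Gn n \<omega> y - Gn n \<omega> y / (real n + 1)"
          proof -
            have key: "\<And>S::real. S / (real n + 1) = S / real n - S / real n / (real n + 1)"
              using npos by (simp add: divide_simps) (simp add: algebra_simps)
            show ?thesis unfolding emp_cdf_def Gn_def by (rule key)
          qed
          have "Gn n \<omega> y / (real n + 1) \<le> 1 / (real n + 1)"
            using Gn_props(2)[OF n1, of \<omega> y] by (intro divide_right_mono) auto
          moreover have "0 \<le> Gn n \<omega> y / (real n + 1)"
            using Gn_props(2)[OF n1, of \<omega> y] by simp
          moreover have "1 / real N \<le> e" using N by (simp add: inverse_eq_divide)
          ultimately show "\<bar>emp_cdf n (\<lambda>k. Ys k \<omega>) y - cdf (distr M borel Y) y\<bar> \<le> \<epsilon>"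
            using g E2 unfolding emp F_def e_def by linarith
        qed
      qed
    qed
  qed
qed

end


lemma approx_avg:
  fixes x u :: "nat \<Rightarrow> real" and z :: "nat \<Rightarrow> nat \<Rightarrow> real"
  assumes A: "(\<lambda>n. (\<Sum>k=1..n. x k * u k) / real n) \<longlonglongrightarrow> A"
    and B: "(\<lambda>n. (\<Sum>k=1..n. \<bar>x k\<bar>) / real n) \<longlonglongrightarrow> B"
    and Z: "\<forall>\<epsilon>>0. eventually (\<lambda>n. \<forall>k. \<bar>z n k - u k\<bar> \<le> \<epsilon>) sequentially"
  shows "(\<lambda>n. (\<Sum>k=1..n. x k * z n k) / real n) \<longlonglongrightarrow> A"
proof -
  define d where "d n = (\<Sum>k=1..n. x k * (z n k - u k)) / real n" for n
  have B0: "B \<ge> 0"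
  proof (rule tendsto_lowerbound[OF B])
    show "eventually (\<lambda>n. 0 \<le> (\<Sum>k=1..n. \<bar>x k\<bar>) / real n) sequentially"
      by (intro always_eventually allI divide_nonneg_nonneg sum_nonneg) auto
  qed simp
  have d0: "d \<longlonglongrightarrow> 0"
  proof (rule LIMSEQ_I)
    fix r :: real assume r: "r > 0"
    define \<epsilon> where "\<epsilon> = r / (B + 2)"
    have eps: "\<epsilon> > 0" unfolding \<epsilon>_def using r B0 by simp
    have ev1: "eventually (\<lambda>n. \<forall>k. \<bar>z n k - u k\<bar> \<le> \<epsilon>) sequentially" using Z eps by blast
    have ev2: "eventually (\<lambda>n. (\<Sum>k=1..n. \<bar>x k\<bar>) / real n < B + 1) sequentially"
      using B by (rule order_tendstoD) simp
    have "eventually (\<lambda>n. norm (d n - 0) < r) sequentially"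
      using ev1 ev2
    proof eventually_elim
      fix n assume e1: "\<forall>k. \<bar>z n k - u k\<bar> \<le> \<epsilon>" and e2: "(\<Sum>k=1..n. \<bar>x k\<bar>) / real n < B + 1"
      have "\<bar>\<Sum>k=1..n. x k * (z n k - u k)\<bar> \<le> (\<Sum>k=1..n. \<bar>x k * (z n k - u k)\<bar>)" by (rule sum_abs)
      also have "\<dots> \<le> (\<Sum>k=1..n. \<bar>x k\<bar> * \<epsilon>)"
        by (rule sum_mono) (use e1 in \<open>auto simp: abs_mult intro: mult_left_mono\<close>)
      also have "\<dots> = \<epsilon> * (\<Sum>k=1..n. \<bar>x k\<bar>)" by (simp add: sum_distrib_left mult.commute)
      finally have h: "\<bar>\<Sum>k=1..n. x k * (z n k - u k)\<bar> \<le> \<epsilon> * (\<Sum>k=1..n. \<bar>x k\<bar>)" .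
      have "\<bar>d n\<bar> \<le> \<epsilon> * ((\<Sum>k=1..n. \<bar>x k\<bar>) / real n)"
        unfolding d_def using h by (simp add: abs_divide divide_right_mono)
      also have "\<dots> \<le> \<epsilon> * (B + 1)" using e2 eps by (intro mult_left_mono) auto
      also have "\<dots> < r"
      proof -
        have "\<epsilon> * (B + 1) = r * ((B + 1) / (B + 2))" unfolding \<epsilon>_def by simp
        also have "\<dots> < r * 1" using r B0 by (intro mult_strict_left_mono) auto
        finally show ?thesis by simp
      qed
      finally show "norm (d n - 0) < r" by simp
    qed
    then show "\<exists>no. \<forall>n\<ge>no. norm (d n - 0) < r" unfolding eventually_sequentially by blast
  qed
  have "(\<lambda>n. (\<Sum>k=1..n. x k * u k) / real n + d n) \<longlonglongrightarrow> A + 0"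
    by (intro tendsto_add A d0)
  moreover have "\<And>n. (\<Sum>k=1..n. x k * u k) / real n + d n = (\<Sum>k=1..n. x k * z n k) / real n"
    unfolding d_def by (simp add: add_divide_distrib[symmetric] sum.distrib[symmetric] algebra_simps)
  ultimately show ?thesis by simp
qed

lemma cov_sum:
  fixes a b :: "nat \<Rightarrow> real"
  assumes n: "n \<ge> 1"
  shows "(\<Sum>k=1..n. (a k - mean_n n a) * (b k - mean_n n b))
       = real n * ((\<Sum>k=1..n. a k * b k) / real n - mean_n n a * mean_n n b)"
proof -
  define p where "p = mean_n n a"
  define q where "q = mean_n n b"
  have npos: "real n > 0" using n by simp
  have Sa: "(\<Sum>k=1..n. a k) = real n * p" unfolding p_def mean_n_def using npos by simp
  have Sb: "(\<Sum>k=1..n. b k) = real n * q" unfolding q_def mean_n_def using npos by simp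
  have "(\<Sum>k=1..n. (a k - p) * (b k - q)) = (\<Sum>k=1..n. a k * b k - q * a k - p * b k + p * q)"
    by (intro sum.cong) (auto simp: algebra_simps)
  also have "\<dots> = (\<Sum>k=1..n. a k * b k) - q * (\<Sum>k=1..n. a k) - p * (\<Sum>k=1..n. b k) + real n * (p * q)"
    by (simp add: sum.distrib sum_subtractf sum_distrib_left)
  also have "\<dots> = real n * ((\<Sum>k=1..n. a k * b k) / real n - p * q)"
    unfolding Sa Sb using npos by (simp add: field_simps)
  finally show ?thesis unfolding p_def q_def .
qed


lemma (in prob_space) covar_eq:
  fixes U V :: "'a \<Rightarrow> real"
  assumes iU: "integrable M U" and iV: "integrable M V" and iUV: "integrable M (\<lambda>\<omega>. U \<omega> * V \<omega>)"
  shows "covar M U V = expectation (\<lambda>\<omega>. U \<omega> * V \<omega>) - expectation U * expectation V"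
proof -
  define a where "a = expectation U"
  define b where "b = expectation V"
  have "covar M U V = expectation (\<lambda>\<omega>. (U \<omega> * V \<omega> - b * U \<omega>) - (a * V \<omega> - a * b))"
    unfolding covar_def a_def b_def by (rule Bochner_Integration.integral_cong) (auto simp: algebra_simps)
  also have "\<dots> = expectation (\<lambda>\<omega>. U \<omega> * V \<omega> - b * U \<omega>) - expectation (\<lambda>\<omega>. a * V \<omega> - a * b)"
    by (rule Bochner_Integration.integral_diff) (use iU iV iUV in auto)
  also have "expectation (\<lambda>\<omega>. U \<omega> * V \<omega> - b * U \<omega>) = expectation (\<lambda>\<omega>. U \<omega> * V \<omega>) - b * a"
    using iU iUV unfolding a_def by simp
  also have "expectation (\<lambda>\<omega>. a * V \<omega> - a * b) = a * b - a * b"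
    using iV unfolding b_def by (simp add: prob_space)
  finally show ?thesis unfolding a_def b_def by (simp add: algebra_simps)
qed

lemma (in prob_space) var_eq:
  fixes U :: "'a \<Rightarrow> real"
  assumes iU: "integrable M U" and iU2: "integrable M (\<lambda>\<omega>. (U \<omega>)\<^sup>2)"
  shows "var M U = expectation (\<lambda>\<omega>. (U \<omega>)\<^sup>2) - (expectation U)\<^sup>2"
  unfolding var_def using variance_eq[OF iU iU2] by simp

lemma emp_cdf_01: "0 \<le> emp_cdf n ys t \<and> emp_cdf n ys t \<le> 1"
proof -
  have "(\<Sum>k=1..n. if ys k \<le> t then 1 else (0::real)) \<le> (\<Sum>k=1..n. 1)" by (rule sum_mono) auto
  then have "(\<Sum>k=1..n. if ys k \<le> t then 1 else (0::real)) \<le> real n" by simp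
  moreover have "0 \<le> (\<Sum>k=1..n. if ys k \<le> t then 1 else (0::real))" by (rule sum_nonneg) auto
  ultimately show ?thesis unfolding emp_cdf_def by (simp add: divide_simps)
qed


context gini_setup begin

lemma main:
  fixes w :: "real \<Rightarrow> real"
  assumes intX: "integrable M X" and intY2: "integrable M (\<lambda>\<omega>. (Y \<omega>)\<^sup>2)"
    and intXY: "integrable M (\<lambda>\<omega>. X \<omega> * Y \<omega>)"
    and wcont: "continuous_on {0..1} w" and varpos: "var M Y > 0"
    and covnz: "covar M Y (\<lambda>\<omega>. w (cdf_of M Y (Y \<omega>))) \<noteq> 0"
  shows "AE \<omega> in M. (\<lambda>n. Delta_hat w n (\<lambda>k. Xs k \<omega>) (\<lambda>k. Ys k \<omega>)) \<longlonglongrightarrow> Delta M w X Y"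
proof -
  interpret D: real_distribution "distr M borel Y" using Ym by simp
  define F where "F = cdf (distr M borel Y)"
  define g where "g y = w (F y)" for y
  have F01: "\<And>y. 0 \<le> F y \<and> F y \<le> 1" unfolding F_def using D.cdf_nonneg D.cdf_bounded_prob by blast
  have Fm: "F \<in> borel_measurable borel"
    unfolding F_def by (rule borel_measurable_mono) (simp add: mono_def D.cdf_nondecreasing)
  define w' where "w' z = w (max 0 (min 1 z))" for z
  have w'c: "continuous_on UNIV w'"
    unfolding w'_def by (rule continuous_on_compose2[OF wcont]) (auto intro!: continuous_intros)
  have w'm: "w' \<in> borel_measurable borel" by (rule borel_measurable_continuous_onI[OF w'c])
  have gw': "\<And>y. g y = w' (F y)"
  proof -
    fix y
    have "min 1 (F y) = F y" using F01[of y] by (intro min_absorb2) simp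
    moreover have "max 0 (F y) = F y" using F01[of y] by (intro max_absorb2) simp
    ultimately show "g y = w' (F y)" unfolding g_def w'_def by simp
  qed
  have gm[measurable]: "g \<in> borel_measurable borel"
  proof -
    have "(\<lambda>y. w' (F y)) \<in> borel_measurable borel" by (rule measurable_compose[OF Fm w'm])
    moreover have "(\<lambda>y. w' (F y)) = g" using gw' by (simp add: fun_eq_iff)
    ultimately show ?thesis by simp
  qed
  obtain Bw where Bw: "\<And>z. z \<in> {0..1} \<Longrightarrow> \<bar>w z\<bar> \<le> Bw"
  proof -
    have "compact (w ` {0..1})" by (rule compact_continuous_image[OF wcont compact_Icc])
    then have "bounded (w ` {0..1})" by (rule compact_imp_bounded)
    then obtain a where "\<forall>x\<in>w ` {0..1}. norm x \<le> a" unfolding bounded_iff by blast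
    then show ?thesis using that[of a] by simp
  qed
  have gb: "\<And>y. \<bar>g y\<bar> \<le> Bw" unfolding g_def using Bw F01 by auto
  have uc: "uniformly_continuous_on {0..1} w"
    by (rule compact_uniformly_continuous[OF wcont compact_Icc])
  have intY: "integrable M Y" by (rule square_integrable_imp_integrable[OF Ym intY2])
  have gYm: "(\<lambda>\<omega>. g (Y \<omega>)) \<in> borel_measurable M" by (rule measurable_compose[OF Ym gm])
  have intg: "integrable M (\<lambda>\<omega>. g (Y \<omega>))"
    by (rule bounded_integrable[where B=Bw]) (use gYm gb in auto)
  have intXg: "integrable M (\<lambda>\<omega>. X \<omega> * g (Y \<omega>))"
  proof (rule Bochner_Integration.integrable_bound[where f="\<lambda>\<omega>. Bw * \<bar>X \<omega>\<bar>"])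
    show "integrable M (\<lambda>\<omega>. Bw * \<bar>X \<omega>\<bar>)" using intX by auto
    show "(\<lambda>\<omega>. X \<omega> * g (Y \<omega>)) \<in> borel_measurable M" using gYm by measurable
    show "AE \<omega> in M. norm (X \<omega> * g (Y \<omega>)) \<le> norm (Bw * \<bar>X \<omega>\<bar>)"
    proof (rule AE_I2)
      fix \<omega>
      have "\<bar>X \<omega> * g (Y \<omega>)\<bar> \<le> \<bar>X \<omega>\<bar> * Bw" using gb[of "Y \<omega>"] by (simp add: abs_mult mult_left_mono)
      also have "\<dots> \<le> \<bar>Bw * \<bar>X \<omega>\<bar>\<bar>" using abs_ge_self[of "Bw * \<bar>X \<omega>\<bar>"] by (simp add: mult.commute)
      finally show "norm (X \<omega> * g (Y \<omega>)) \<le> norm (Bw * \<bar>X \<omega>\<bar>)" by simp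
    qed
  qed
  have intYg: "integrable M (\<lambda>\<omega>. Y \<omega> * g (Y \<omega>))"
  proof (rule Bochner_Integration.integrable_bound[where f="\<lambda>\<omega>. Bw * \<bar>Y \<omega>\<bar>"])
    show "integrable M (\<lambda>\<omega>. Bw * \<bar>Y \<omega>\<bar>)" using intY by auto
    show "(\<lambda>\<omega>. Y \<omega> * g (Y \<omega>)) \<in> borel_measurable M" using gYm by measurable
    show "AE \<omega> in M. norm (Y \<omega> * g (Y \<omega>)) \<le> norm (Bw * \<bar>Y \<omega>\<bar>)"
    proof (rule AE_I2)
      fix \<omega>
      have "\<bar>Y \<omega> * g (Y \<omega>)\<bar> \<le> \<bar>Y \<omega>\<bar> * Bw" using gb[of "Y \<omega>"] by (simp add: abs_mult mult_left_mono)
      also have "\<dots> \<le> \<bar>Bw * \<bar>Y \<omega>\<bar>\<bar>" using abs_ge_self[of "Bw * \<bar>Y \<omega>\<bar>"] by (simp add: mult.commute)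
      finally show "norm (Y \<omega> * g (Y \<omega>)) \<le> norm (Bw * \<bar>Y \<omega>\<bar>)" by simp
    qed
  qed
  have L1: "AE \<omega> in M. (\<lambda>n. (\<Sum>k=1..n. Xs k \<omega>) / real n) \<longlonglongrightarrow> expectation X"
    using slln_h[OF fst_borel] intX by simp
  have L2: "AE \<omega> in M. (\<lambda>n. (\<Sum>k=1..n. Ys k \<omega>) / real n) \<longlonglongrightarrow> expectation Y"
    using slln_h[OF snd_borel] intY by simp
  have L3: "AE \<omega> in M. (\<lambda>n. (\<Sum>k=1..n. Xs k \<omega> * Ys k \<omega>) / real n) \<longlonglongrightarrow> expectation (\<lambda>\<omega>. X \<omega> * Y \<omega>)"
  proof -
    have hm: "(\<lambda>p::real\<times>real. fst p * snd p) \<in> borel_measurable borel" by measurable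
    show ?thesis using slln_h[OF hm] intXY by simp
  qed
  have L4: "AE \<omega> in M. (\<lambda>n. (\<Sum>k=1..n. Ys k \<omega> * Ys k \<omega>) / real n) \<longlonglongrightarrow> expectation (\<lambda>\<omega>. (Y \<omega>)\<^sup>2)"
  proof -
    have hm: "(\<lambda>p::real\<times>real. snd p * snd p) \<in> borel_measurable borel" by measurable
    show ?thesis using slln_h[OF hm] intY2 by (simp add: power2_eq_square)
  qed
  have L5: "AE \<omega> in M. (\<lambda>n. (\<Sum>k=1..n. \<bar>Xs k \<omega>\<bar>) / real n) \<longlonglongrightarrow> expectation (\<lambda>\<omega>. \<bar>X \<omega>\<bar>)"
  proof -
    have hm: "(\<lambda>p::real\<times>real. \<bar>fst p\<bar>) \<in> borel_measurable borel" by measurable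
    show ?thesis using slln_h[OF hm] intX by simp
  qed
  have L6: "AE \<omega> in M. (\<lambda>n. (\<Sum>k=1..n. \<bar>Ys k \<omega>\<bar>) / real n) \<longlonglongrightarrow> expectation (\<lambda>\<omega>. \<bar>Y \<omega>\<bar>)"
  proof -
    have hm: "(\<lambda>p::real\<times>real. \<bar>snd p\<bar>) \<in> borel_measurable borel" by measurable
    show ?thesis using slln_h[OF hm] intY by simp
  qed
  have L7: "AE \<omega> in M. (\<lambda>n. (\<Sum>k=1..n. Xs k \<omega> * g (Ys k \<omega>)) / real n) \<longlonglongrightarrow> expectation (\<lambda>\<omega>. X \<omega> * g (Y \<omega>))"
  proof -
    have hm: "(\<lambda>p::real\<times>real. fst p * g (snd p)) \<in> borel_measurable borel" by measurable
    show ?thesis using slln_h[OF hm] intXg by simp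
  qed
  have L8: "AE \<omega> in M. (\<lambda>n. (\<Sum>k=1..n. Ys k \<omega> * g (Ys k \<omega>)) / real n) \<longlonglongrightarrow> expectation (\<lambda>\<omega>. Y \<omega> * g (Y \<omega>))"
  proof -
    have hm: "(\<lambda>p::real\<times>real. snd p * g (snd p)) \<in> borel_measurable borel" by measurable
    show ?thesis using slln_h[OF hm] intYg by simp
  qed
  have L9: "AE \<omega> in M. (\<lambda>n. (\<Sum>k=1..n. 1 * g (Ys k \<omega>)) / real n) \<longlonglongrightarrow> expectation (\<lambda>\<omega>. g (Y \<omega>))"
  proof -
    have hm: "(\<lambda>p::real\<times>real. g (snd p)) \<in> borel_measurable borel" by measurable
    show ?thesis using slln_h[OF hm] intg by simp
  qed
  define eX where "eX = expectation X"
  define eY where "eY = expectation Y"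
  define eXY where "eXY = expectation (\<lambda>\<omega>. X \<omega> * Y \<omega>)"
  define eY2 where "eY2 = expectation (\<lambda>\<omega>. (Y \<omega>)\<^sup>2)"
  define eXg where "eXg = expectation (\<lambda>\<omega>. X \<omega> * g (Y \<omega>))"
  define eYg where "eYg = expectation (\<lambda>\<omega>. Y \<omega> * g (Y \<omega>))"
  define eg where "eg = expectation (\<lambda>\<omega>. g (Y \<omega>))"
  have gY_eq: "(\<lambda>\<omega>. w (cdf_of M Y (Y \<omega>))) = (\<lambda>\<omega>. g (Y \<omega>))"
    unfolding g_def F_def cdf_of_def by simp
  have covXY: "covar M X Y = eXY - eX * eY"
    unfolding eXY_def eX_def eY_def by (rule covar_eq[OF intX intY intXY])
  have varY: "var M Y = eY2 - eY\<^sup>2"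
    unfolding eY2_def eY_def by (rule var_eq[OF intY intY2])
  have covXg: "covar M X (\<lambda>\<omega>. w (cdf_of M Y (Y \<omega>))) = eXg - eX * eg"
    unfolding gY_eq eXg_def eX_def eg_def by (rule covar_eq[OF intX intg intXg])
  have covYg: "covar M Y (\<lambda>\<omega>. w (cdf_of M Y (Y \<omega>))) = eYg - eY * eg"
    unfolding gY_eq eYg_def eY_def eg_def by (rule covar_eq[OF intY intg intYg])
  have DeltaEq: "Delta M w X Y = (eXg - eX * eg) / (eYg - eY * eg) - (eXY - eX * eY) / (eY2 - eY\<^sup>2)"
    unfolding Delta_def beta_G_def beta_cl_def covXg covYg covXY varY ..
  have nz1: "eYg - eY * eg \<noteq> 0" using covnz covYg by simp
  have nz2: "eY2 - eY\<^sup>2 \<noteq> 0" using varpos varY by simp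
  have GC: "AE \<omega> in M. \<forall>\<epsilon>>0. eventually (\<lambda>n. \<forall>y. \<bar>emp_cdf n (\<lambda>k. Ys k \<omega>) y - F y\<bar> \<le> \<epsilon>) sequentially"
    using gc unfolding F_def .
  show ?thesis
    using L1 L2 L3 L4 L5 L6 L7 L8 L9 GC
  proof eventually_elim
    case (elim \<omega>)
    define x where "x k = Xs k \<omega>" for k
    define y where "y k = Ys k \<omega>" for k
    define u where "u k = g (y k)" for k
    define z where "z n k = w (emp_cdf n y (y k))" for n k
    have xe: "(\<lambda>k. Xs k \<omega>) = x" unfolding x_def ..
    have ye: "(\<lambda>k. Ys k \<omega>) = y" unfolding y_def ..
    have l1: "(\<lambda>n. (\<Sum>k=1..n. x k) / real n) \<longlonglongrightarrow> eX" using elim(1) unfolding x_def eX_def .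
    have l2: "(\<lambda>n. (\<Sum>k=1..n. y k) / real n) \<longlonglongrightarrow> eY" using elim(2) unfolding y_def eY_def .
    have l3: "(\<lambda>n. (\<Sum>k=1..n. x k * y k) / real n) \<longlonglongrightarrow> eXY" using elim(3) unfolding x_def y_def eXY_def .
    have l4: "(\<lambda>n. (\<Sum>k=1..n. y k * y k) / real n) \<longlonglongrightarrow> eY2" using elim(4) unfolding y_def eY2_def .
    have l5: "(\<lambda>n. (\<Sum>k=1..n. \<bar>x k\<bar>) / real n) \<longlonglongrightarrow> expectation (\<lambda>\<omega>. \<bar>X \<omega>\<bar>)" using elim(5) unfolding x_def .
    have l6: "(\<lambda>n. (\<Sum>k=1..n. \<bar>y k\<bar>) / real n) \<longlonglongrightarrow> expectation (\<lambda>\<omega>. \<bar>Y \<omega>\<bar>)" using elim(6) unfolding y_def .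
    have l7: "(\<lambda>n. (\<Sum>k=1..n. x k * u k) / real n) \<longlonglongrightarrow> eXg" using elim(7) unfolding x_def u_def y_def eXg_def .
    have l8: "(\<lambda>n. (\<Sum>k=1..n. y k * u k) / real n) \<longlonglongrightarrow> eYg" using elim(8) unfolding u_def y_def eYg_def .
    have l9: "(\<lambda>n. (\<Sum>k=1..n. 1 * u k) / real n) \<longlonglongrightarrow> eg" using elim(9) unfolding u_def y_def eg_def .
    have G: "\<forall>\<epsilon>>0. eventually (\<lambda>n. \<forall>t. \<bar>emp_cdf n y t - F t\<bar> \<le> \<epsilon>) sequentially"
      using elim(10) unfolding y_def .
    have hz: "\<forall>\<epsilon>>0. eventually (\<lambda>n. \<forall>k. \<bar>z n k - u k\<bar> \<le> \<epsilon>) sequentially"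
    proof (intro allI impI)
      fix \<epsilon> :: real assume eps: "\<epsilon> > 0"
      obtain d where d: "d > 0" and dd: "\<And>a b. a \<in> {0..1} \<Longrightarrow> b \<in> {0..1} \<Longrightarrow> dist b a < d \<Longrightarrow> dist (w b) (w a) < \<epsilon>"
        using uc eps unfolding uniformly_continuous_on_def by metis
      have "eventually (\<lambda>n. \<forall>t. \<bar>emp_cdf n y t - F t\<bar> \<le> d / 2) sequentially"
        using G[rule_format, of "d / 2"] d by simp
      then show "eventually (\<lambda>n. \<forall>k. \<bar>z n k - u k\<bar> \<le> \<epsilon>) sequentially"
      proof eventually_elim
        case (elim n)
        show "\<forall>k. \<bar>z n k - u k\<bar> \<le> \<epsilon>"
        proof
          fix k
          have a: "F (y k) \<in> {0..1}" using F01 by simp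
          have b: "emp_cdf n y (y k) \<in> {0..1}" using emp_cdf_01 by simp
          have "dist (emp_cdf n y (y k)) (F (y k)) < d"
            using elim[rule_format, of "y k"] d by (simp add: dist_real_def)
          then have "dist (w (emp_cdf n y (y k))) (w (F (y k))) < \<epsilon>" using dd[OF a b] by simp
          then show "\<bar>z n k - u k\<bar> \<le> \<epsilon>" unfolding z_def u_def g_def dist_real_def by simp
        qed
      qed
    qed
    have cXz: "(\<lambda>n. (\<Sum>k=1..n. x k * z n k) / real n) \<longlonglongrightarrow> eXg" by (rule approx_avg[OF l7 l5 hz])
    have cYz: "(\<lambda>n. (\<Sum>k=1..n. y k * z n k) / real n) \<longlonglongrightarrow> eYg" by (rule approx_avg[OF l8 l6 hz])
    have one: "(\<lambda>n. (\<Sum>k=1..n. \<bar>1::real\<bar>) / real n) \<longlonglongrightarrow> 1"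
    proof (rule tendsto_eventually)
      show "eventually (\<lambda>n. (\<Sum>k=1..n. \<bar>1::real\<bar>) / real n = 1) sequentially"
        unfolding eventually_sequentially by (intro exI[of _ 1]) auto
    qed
    have c1z: "(\<lambda>n. (\<Sum>k=1..n. 1 * z n k) / real n) \<longlonglongrightarrow> eg" by (rule approx_avg[OF l9 one hz])
    have mx: "\<And>n. mean_n n x = (\<Sum>k=1..n. x k) / real n" unfolding mean_n_def ..
    have my: "\<And>n. mean_n n y = (\<Sum>k=1..n. y k) / real n" unfolding mean_n_def ..
    have mz: "\<And>n. mean_n n (z n) = (\<Sum>k=1..n. 1 * z n k) / real n" unfolding mean_n_def by simp
    define numG where "numG n = (\<Sum>k=1..n. x k * z n k) / real n - mean_n n x * mean_n n (z n)" for n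
    define denG where "denG n = (\<Sum>k=1..n. y k * z n k) / real n - mean_n n y * mean_n n (z n)" for n
    define num where "num n = (\<Sum>k=1..n. x k * y k) / real n - mean_n n x * mean_n n y" for n
    define den where "den n = (\<Sum>k=1..n. y k * y k) / real n - mean_n n y * mean_n n y" for n
    have t1: "numG \<longlonglongrightarrow> eXg - eX * eg" unfolding numG_def mx mz by (intro tendsto_intros cXz l1 c1z)
    have t2: "denG \<longlonglongrightarrow> eYg - eY * eg" unfolding denG_def my mz by (intro tendsto_intros cYz l2 c1z)
    have t3: "num \<longlonglongrightarrow> eXY - eX * eY" unfolding num_def mx my by (intro tendsto_intros l3 l1 l2)
    have t4: "den \<longlonglongrightarrow> eY2 - eY\<^sup>2" unfolding den_def my power2_eq_square by (intro tendsto_intros l4 l2)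
    have lim: "(\<lambda>n. numG n / denG n - num n / den n) \<longlonglongrightarrow> Delta M w X Y"
      unfolding DeltaEq by (intro tendsto_diff tendsto_divide t1 t2 t3 t4 nz1 nz2)
    have evq: "eventually (\<lambda>n. numG n / denG n - num n / den n = Delta_hat w n x y) sequentially"
      unfolding eventually_sequentially
    proof (intro exI[of _ 1] allI impI)
      fix n :: nat assume n: "n \<ge> 1"
      have nz: "real n \<noteq> 0" using n by simp
      have bG: "beta_G_hat w n x y = numG n / denG n"
      proof -
        have "beta_G_hat w n x y = (\<Sum>k=1..n. (x k - mean_n n x) * (z n k - mean_n n (z n)))
                                  / (\<Sum>k=1..n. (y k - mean_n n y) * (z n k - mean_n n (z n)))"
          unfolding beta_G_hat_def Let_def z_def by simp
        also have "\<dots> = (real n * numG n) / (real n * denG n)"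
          unfolding numG_def denG_def by (simp only: cov_sum[OF n])
        also have "\<dots> = numG n / denG n" using nz by simp
        finally show ?thesis .
      qed
      have bH: "beta_hat n x y = num n / den n"
      proof -
        have "beta_hat n x y = (\<Sum>k=1..n. (x k - mean_n n x) * (y k - mean_n n y))
                                  / (\<Sum>k=1..n. (y k - mean_n n y) * (y k - mean_n n y))"
          unfolding beta_hat_def by (simp add: power2_eq_square)
        also have "\<dots> = (real n * num n) / (real n * den n)"
          unfolding num_def den_def by (simp only: cov_sum[OF n])
        also have "\<dots> = num n / den n" using nz by simp
        finally show ?thesis .
      qed
      show "numG n / denG n - num n / den n = Delta_hat w n x y"
        unfolding Delta_hat_def bG bH ..
    qed
    have "(\<lambda>n. Delta_hat w n x y) \<longlonglongrightarrow> Delta M w X Y"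
      by (rule Lim_transform_eventually[OF lim evq])
    then show ?case unfolding xe ye .
  qed
qed

end

theorem theorem1:
  fixes M :: "'a measure"
    and X Y :: "'a \<Rightarrow> real"
    and Xs Ys :: "nat \<Rightarrow> 'a \<Rightarrow> real"
    and w :: "real \<Rightarrow> real"
  assumes "prob_space M"
    and "X \<in> borel_measurable M" and "Y \<in> borel_measurable M"
    and "prob_space.indep_vars M (\<lambda>_. borel) (\<lambda>i \<omega>. (Xs i \<omega>, Ys i \<omega>)) {1..}"
    and "\<And>i. i \<ge> 1 \<Longrightarrow>
           distr M borel (\<lambda>\<omega>. (Xs i \<omega>, Ys i \<omega>)) = distr M borel (\<lambda>\<omega>. (X \<omega>, Y \<omega>))"
    and "integrable M X"
    and "integrable M (\<lambda>\<omega>. (Y \<omega>)\<^sup>2)"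
    and "integrable M (\<lambda>\<omega>. X \<omega> * Y \<omega>)"
    and "continuous_on {0..1} w"
    and "var M Y > 0"
    and "integrable M (\<lambda>\<omega>. (Y \<omega> - (\<integral>x. Y x \<partial>M)) *
                       (w (cdf_of M Y (Y \<omega>)) - (\<integral>x. w (cdf_of M Y (Y x)) \<partial>M)))"
    and "covar M Y (\<lambda>\<omega>. w (cdf_of M Y (Y \<omega>))) \<noteq> 0"
  shows "AE \<omega> in M. (\<lambda>n. Delta_hat w n (\<lambda>k. Xs k \<omega>) (\<lambda>k. Ys k \<omega>)) \<longlonglongrightarrow> Delta M w X Y"
  proof -
  have "gini_setup M X Y Xs Ys"
    unfolding gini_setup_def gini_setup_axioms_def using assms(1-5) by blast
  then interpret gini_setup M X Y Xs Ys .
  show ?thesis by (rule main[OF assms(6-10) assms(12)])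
qed

end
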